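(* Fix $\beta_0\in\mathbb{R}^p$, $\sigma^2>0$, and a prior density $\pi$ on $\mathbb{R}^p$ that is continuous, bounded and satisfies $\pi(\beta_0)>0$. Let $r_n\to\infty$ and $\epsilon_n\to0$ be deterministic sequences. For each $n$, let $\mathcal{P}_n$ be a set of distributions $P$ of length-$n$ trajectories $H_n$ generated by the adaptive linear Gaussian sampling procedure (with true parameter $\beta_0$ and variance $\sigma^2$) under some sampling rule $\Lambda$, such that for every $P\in\mathcal{P}_n$: (i) each $x_j\in\{e_1,\dots,e_p\}$ almost surely; and (ii) $P\big(\lambda_{\min}(\mathbf{X}_n^\top\mathbf{X}_n)>r_n\big)>1-\epsilon_n$. Then for every $c>0$, $$\limsup_{n\to\infty}\ \sup_{P\in\mathcal{P}_n} P\Big(\big\|\pi(\cdot\mid H_n)-\mathcal{N}\big(\hat\beta_n,\sigma^2(\mathbf{X}_n^\top\mathbf{X}_n)^{-1}\big)\big\|_{\mathrm{TV}}>c\Big)=0.$$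
   Context: Adaptive linear Gaussian sampling procedure: given a covariate sampling rule $\Lambda$ mapping any finite history $H_{j-1}=((x_1,y_1),\dots,(x_{j-1},y_{j-1}))$ to a distribution $\Lambda(\cdot\mid H_{j-1})$ on $\mathbb{R}^p$, set $H_0=\emptyset$ and for $j=1,\dots,n$: draw $x_j\sim\Lambda(\cdot\mid H_{j-1})$, then $y_j\sim\mathcal{N}(x_j^\top\beta_0,\sigma^2)$ conditionally on the past and $x_j$, and set $H_j=((x_1,y_1),\dots,(x_j,y_j))$. $\mathbf{X}_n$ is the $n\times p$ matrix with rows $x_j^\top$, $\mathbf{y}_n$ the vector of $y_j$, $\hat\beta_n=(\mathbf{X}_n^\top\mathbf{X}_n)^{-1}\mathbf{X}_n^\top\mathbf{y}_n$, and $\pi(\beta\mid H_n)\propto\pi(\beta)\prod_{j=1}^n\exp(-(y_j-x_j^\top\beta)^2/(2\sigma^2))$ is the posterior. $\|\cdot\|_{\mathrm{TV}}$ is total variation distance. *)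

theory Defs
  imports "HOL-Analysis.Analysis" "HOL-Probability.Probability"
begin

text \<open>A history of length j: a function on indices 0..j-1 (extensional elsewhere),
  entry j = (x_j, y_j) with x_j in R^p and y_j real.\<close>
type_synonym 'p hist = "nat \<Rightarrow> (real^'p) \<times> real"

definition hist_space :: "nat \<Rightarrow> 'p::finite hist measure" where
  "hist_space j = PiM {..<j} (\<lambda>_. borel)"

definition valid_rule :: "(nat \<Rightarrow> 'p::finite hist \<Rightarrow> (real^'p) measure) \<Rightarrow> bool" where
  "valid_rule \<Lambda> \<longleftrightarrow> (\<forall>j. \<Lambda> j \<in> hist_space j \<rightarrow>\<^sub>M prob_algebra borel)"

fun traj :: "(nat \<Rightarrow> 'p::finite hist \<Rightarrow> (real^'p) measure) \<Rightarrow> real^'p \<Rightarrow> real \<Rightarrow> nat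
              \<Rightarrow> 'p hist measure" where
  "traj \<Lambda> \<beta>0 \<sigma>2 0 = return (hist_space 0) (\<lambda>_. undefined)"
| "traj \<Lambda> \<beta>0 \<sigma>2 (Suc j) =
     bind (traj \<Lambda> \<beta>0 \<sigma>2 j) (\<lambda>h. bind (\<Lambda> j h) (\<lambda>x.
       distr (density lborel (normal_density (x \<bullet> \<beta>0) (sqrt \<sigma>2))) (hist_space (Suc j))
             (\<lambda>y. h(j := (x, y)))))"

definition XtX :: "nat \<Rightarrow> 'p::finite hist \<Rightarrow> real^'p^'p" where
  "XtX n h = (\<chi> a b. \<Sum>j<n. fst (h j) $ a * fst (h j) $ b)"

definition Xty :: "nat \<Rightarrow> 'p::finite hist \<Rightarrow> real^'p" where
  "Xty n h = (\<chi> a. \<Sum>j<n. fst (h j) $ a * snd (h j))"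

definition beta_hat :: "nat \<Rightarrow> 'p::finite hist \<Rightarrow> real^'p" where
  "beta_hat n h = matrix_inv (XtX n h) *v Xty n h"

definition lambda_min :: "real^'p^'p \<Rightarrow> real" where
  "lambda_min A = Min {l. \<exists>v. v \<noteq> 0 \<and> A *v v = l *\<^sub>R v}"

definition likelihood :: "real \<Rightarrow> nat \<Rightarrow> 'p::finite hist \<Rightarrow> real^'p \<Rightarrow> real" where
  "likelihood \<sigma>2 n h \<beta> = (\<Prod>j<n. exp (- (snd (h j) - fst (h j) \<bullet> \<beta>)\<^sup>2 / (2 * \<sigma>2)))"

definition posterior :: "(real^'p \<Rightarrow> real) \<Rightarrow> real \<Rightarrow> nat \<Rightarrow> 'p::finite hist \<Rightarrow> (real^'p) measure" where
  "posterior \<pi> \<sigma>2 n h =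
     density lborel (\<lambda>\<beta>. ennreal (\<pi> \<beta> * likelihood \<sigma>2 n h \<beta> /
        (\<integral>b. \<pi> b * likelihood \<sigma>2 n h b \<partial>lborel)))"

definition mvn_density :: "real^'p \<Rightarrow> real^'p^'p \<Rightarrow> real^'p \<Rightarrow> real" where
  "mvn_density \<mu> \<Sigma> x =
     (2 * pi) powr (- real CARD('p) / 2) * det \<Sigma> powr (-1/2) *
     exp (- ((x - \<mu>) \<bullet> (matrix_inv \<Sigma> *v (x - \<mu>))) / 2)"

definition mvn :: "real^'p \<Rightarrow> real^'p^'p \<Rightarrow> (real^'p) measure" where
  "mvn \<mu> \<Sigma> = density lborel (\<lambda>x. ennreal (mvn_density \<mu> \<Sigma> x))"

definition tv_dist :: "'a measure \<Rightarrow> 'a measure \<Rightarrow> real" where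
  "tv_dist M N = (SUP A \<in> sets M. \<bar>measure M A - measure N A\<bar>)"

end

theory Submission
  imports Defs
begin

lemma space_hist_space: "space (hist_space j) = PiE {..<j} (\<lambda>_. UNIV)"
  by (simp add: hist_space_def space_PiM)

lemma hist_space_ne: "space (hist_space j) \<noteq> {}"
  by (simp add: space_hist_space PiE_eq_empty_iff)

lemma normal_shift:
  assumes "s > 0"
  shows "density lborel (normal_density \<mu> s) = distr (density lborel (normal_density 0 s)) lborel (\<lambda>t. \<mu> + t)"
proof -
  interpret P: prob_space "density lborel (normal_density 0 s)" by (rule prob_space_normal_density) (rule assms)
  have d: "distributed (density lborel (normal_density 0 s)) lborel (\<lambda>x. x) (normal_density 0 s)"
    unfolding distributed_def by (simp add: distr_id2 sets_eq_imp_space_eq[of "density lborel _" lborel] assms)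
  have "distributed (density lborel (normal_density 0 s)) lborel (\<lambda>x. \<mu> + 1 * x) (normal_density (\<mu> + 1 * 0) (\<bar>1\<bar> * s))"
    by (rule P.normal_density_affine[OF d assms]) simp
  then show ?thesis unfolding distributed_def by simp
qed

definition kern :: "(nat \<Rightarrow> 'p::finite hist \<Rightarrow> (real^'p) measure) \<Rightarrow> real^'p \<Rightarrow> real \<Rightarrow> nat \<Rightarrow> 'p hist \<Rightarrow> 'p hist measure" where
  "kern \<Lambda> \<beta>0 \<sigma>2 j h = bind (\<Lambda> j h) (\<lambda>x.
       distr (density lborel (normal_density (x \<bullet> \<beta>0) (sqrt \<sigma>2))) (hist_space (Suc j))
             (\<lambda>y. h(j := (x, y))))"

lemma traj_Suc': "traj \<Lambda> \<beta>0 \<sigma>2 (Suc j) = bind (traj \<Lambda> \<beta>0 \<sigma>2 j) (kern \<Lambda> \<beta>0 \<sigma>2 j)"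
  unfolding kern_def[abs_def] by simp

lemma distr_normal_shift:
  assumes "s > 0" and F: "F \<in> borel \<rightarrow>\<^sub>M H"
  shows "distr (density lborel (normal_density \<mu> s)) H F = distr (density lborel (normal_density 0 s)) H (\<lambda>t. F (\<mu> + t))"
  unfolding normal_shift[OF assms(1), of \<mu>]
  by (subst distr_distr) (auto simp: F comp_def)

lemma hist_Suc: "hist_space (Suc j) = PiM ({..<j} \<union> {j}) (\<lambda>_. borel)"
  by (simp add: hist_space_def lessThan_Suc Un_commute)

lemma meas_upd:
  "(\<lambda>((h::'p::finite hist, x::real^'p), t::real). h(j := (x, x \<bullet> \<beta>0 + t))) \<in> (hist_space j \<Otimes>\<^sub>M borel) \<Otimes>\<^sub>M lborel \<rightarrow>\<^sub>M hist_space (Suc j)"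
  unfolding hist_Suc split_beta'
proof (rule measurable_fun_upd[where J="{..<j}"])
  show "(\<lambda>w::('p hist \<times> (real^'p)) \<times> real. fst (fst w)) \<in> (hist_space j \<Otimes>\<^sub>M borel) \<Otimes>\<^sub>M lborel \<rightarrow>\<^sub>M Pi\<^sub>M {..<j} (\<lambda>_. borel)"
    unfolding hist_space_def[symmetric] by measurable
  show "(\<lambda>w::('p hist \<times> (real^'p)) \<times> real. (snd (fst w), snd (fst w) \<bullet> \<beta>0 + snd w)) \<in> (hist_space j \<Otimes>\<^sub>M borel) \<Otimes>\<^sub>M lborel \<rightarrow>\<^sub>M borel"
    unfolding borel_prod[symmetric] by measurable
qed simp

lemma kern_inner_meas:
  fixes \<beta>0 :: "real^'p::finite"
  assumes "\<sigma>2 > 0"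
  shows "(\<lambda>(h, x). distr (density lborel (normal_density (x \<bullet> \<beta>0) (sqrt \<sigma>2))) (hist_space (Suc j)) (\<lambda>y. h(j := (x, y))))
       \<in> hist_space j \<Otimes>\<^sub>M borel \<rightarrow>\<^sub>M prob_algebra (hist_space (Suc j))"
proof -
  let ?N0 = "density lborel (normal_density 0 (sqrt \<sigma>2))"
  have s: "sqrt \<sigma>2 > 0" using assms by simp
  have N0: "?N0 \<in> space (prob_algebra lborel)"
    using prob_space_normal_density[OF s] by (simp add: space_prob_algebra)
  have g: "(\<lambda>w. distr ?N0 (hist_space (Suc j)) (\<lambda>t. (fst w)(j := (snd w, snd w \<bullet> \<beta>0 + t))))
       \<in> hist_space j \<Otimes>\<^sub>M borel \<rightarrow>\<^sub>M prob_algebra (hist_space (Suc j))"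
    apply (rule measurable_distr_prob_space2[where M=lborel])
     apply (rule measurable_const[OF N0])
    using meas_upd[of j \<beta>0] by (simp add: case_prod_beta')
  have g': "(\<lambda>(h, x). distr (density lborel (normal_density (x \<bullet> \<beta>0) (sqrt \<sigma>2))) (hist_space (Suc j)) (\<lambda>y. h(j := (x, y))))
       \<in> hist_space j \<Otimes>\<^sub>M borel \<rightarrow>\<^sub>M prob_algebra (hist_space (Suc j))"
  proof (rule measurable_cong[THEN iffD2, OF _ g])
    fix w :: "'p hist \<times> (real^'p)" assume w: "w \<in> space (hist_space j \<Otimes>\<^sub>M borel)"
    obtain h x where hx: "w = (h, x)" by (cases w)
    have hs: "h \<in> space (hist_space j)" using w hx by (simp add: space_pair_measure)
    have F: "(\<lambda>y. h(j := (x, y))) \<in> borel \<rightarrow>\<^sub>M hist_space (Suc j)"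
      using measurable_Pair2[OF meas_upd[of j 0], of "(h,x)"] hs
      by (simp add: space_pair_measure)
    then show "(case w of (h, x) \<Rightarrow> distr (density lborel (normal_density (x \<bullet> \<beta>0) (sqrt \<sigma>2))) (hist_space (Suc j)) (\<lambda>y. h(j := (x, y)))) = distr ?N0 (hist_space (Suc j)) (\<lambda>t. (fst w)(j := (snd w, snd w \<bullet> \<beta>0 + t)))"
      unfolding hx prod.case fst_conv snd_conv by (subst distr_normal_shift[OF s F]) (rule refl)
  qed
  then show ?thesis .
qed

lemma kern_meas:
  fixes \<Lambda> :: "nat \<Rightarrow> 'p::finite hist \<Rightarrow> (real^'p) measure"
  assumes "valid_rule \<Lambda>" "\<sigma>2 > 0"
  shows "kern \<Lambda> \<beta>0 \<sigma>2 j \<in> hist_space j \<rightarrow>\<^sub>M prob_algebra (hist_space (Suc j))"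
proof -
  note g' = kern_inner_meas[OF assms(2), of \<beta>0 j]
  have L: "\<Lambda> j \<in> hist_space j \<rightarrow>\<^sub>M prob_algebra borel" using assms(1) unfolding valid_rule_def by blast
  show ?thesis unfolding kern_def[abs_def]
    by (rule measurable_bind_prob_space2[OF L g'])
qed

lemma traj_facts:
  fixes \<Lambda> :: "nat \<Rightarrow> 'p::finite hist \<Rightarrow> (real^'p) measure"
  assumes "valid_rule \<Lambda>" "\<sigma>2 > 0"
  shows "sets (traj \<Lambda> \<beta>0 \<sigma>2 j) = sets (hist_space j) \<and> prob_space (traj \<Lambda> \<beta>0 \<sigma>2 j)"
proof (induction j)
  case 0
  show ?case by (simp add: prob_space_return space_hist_space)
next
  case (Suc j)
  have S: "sets (traj \<Lambda> \<beta>0 \<sigma>2 j) = sets (hist_space j)" and P: "prob_space (traj \<Lambda> \<beta>0 \<sigma>2 j)"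
    using Suc by auto
  have sp: "space (traj \<Lambda> \<beta>0 \<sigma>2 j) = space (hist_space j)" using S by (rule sets_eq_imp_space_eq)
  have K: "kern \<Lambda> \<beta>0 \<sigma>2 j \<in> traj \<Lambda> \<beta>0 \<sigma>2 j \<rightarrow>\<^sub>M prob_algebra (hist_space (Suc j))"
    by (subst measurable_cong_sets[OF S refl]) (rule kern_meas[OF assms])
  have K': "kern \<Lambda> \<beta>0 \<sigma>2 j \<in> traj \<Lambda> \<beta>0 \<sigma>2 j \<rightarrow>\<^sub>M subprob_algebra (hist_space (Suc j))"
    using measurable_prob_algebraD[OF K] .
  have "sets (traj \<Lambda> \<beta>0 \<sigma>2 (Suc j)) = sets (hist_space (Suc j))"
    unfolding traj_Suc'
    by (rule sets_bind[OF sets_kernel[OF K']]) (auto simp: sp hist_space_ne)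
  moreover have "prob_space (traj \<Lambda> \<beta>0 \<sigma>2 (Suc j))"
    unfolding traj_Suc'
  proof (rule prob_space.prob_space_bind[OF P _ K'])
    show "AE x in traj \<Lambda> \<beta>0 \<sigma>2 j. prob_space (kern \<Lambda> \<beta>0 \<sigma>2 j x)"
      using measurable_space[OF K] by (auto simp: space_prob_algebra)
  qed
  ultimately show ?case by simp
qed

definition NN :: "nat \<Rightarrow> 'p::finite hist \<Rightarrow> 'p \<Rightarrow> real" where
  "NN n h k = (\<Sum>i<n. (fst (h i) $ k)\<^sup>2)"
definition SS :: "real^'p::finite \<Rightarrow> nat \<Rightarrow> 'p hist \<Rightarrow> 'p \<Rightarrow> real" where
  "SS \<beta>0 n h k = (\<Sum>i<n. fst (h i) $ k * (snd (h i) - fst (h i) \<bullet> \<beta>0))"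
definition MM :: "real^'p::finite \<Rightarrow> real \<Rightarrow> real \<Rightarrow> 'p \<Rightarrow> nat \<Rightarrow> 'p hist \<Rightarrow> real" where
  "MM \<beta>0 \<sigma>2 l k n h = exp (l * SS \<beta>0 n h k - l\<^sup>2 * \<sigma>2 * NN n h k / 2)"

lemma hcomp:
  assumes "i < n"
  shows "(\<lambda>h::'p::finite hist. h i) \<in> hist_space n \<rightarrow>\<^sub>M borel"
  unfolding hist_space_def using assms by (intro measurable_component_singleton) auto

lemma hcomp_fst: "i < n \<Longrightarrow> (\<lambda>h::'p::finite hist. fst (h i) $ k) \<in> borel_measurable (hist_space n)"
  by (rule measurable_compose[OF hcomp[of i n], of "\<lambda>v. fst v $ k"]) (auto intro!: borel_measurable_continuous_onI continuous_intros)
lemma hcomp_snd: "i < n \<Longrightarrow> (\<lambda>h::'p::finite hist. snd (h i)) \<in> borel_measurable (hist_space n)"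
  by (rule measurable_compose[OF hcomp[of i n], of "\<lambda>v. snd v"]) (auto intro!: borel_measurable_continuous_onI continuous_intros)
lemma hcomp_inner: "i < n \<Longrightarrow> (\<lambda>h::'p::finite hist. fst (h i) \<bullet> b) \<in> borel_measurable (hist_space n)"
  by (rule measurable_compose[OF hcomp[of i n], of "\<lambda>v. fst v \<bullet> b"]) (auto intro!: borel_measurable_continuous_onI continuous_intros)

lemma NN_meas[measurable]: "(\<lambda>h. NN n h k) \<in> borel_measurable (hist_space n)"
  unfolding NN_def by (intro borel_measurable_sum borel_measurable_power hcomp_fst) auto
lemma SS_meas[measurable]: "(\<lambda>h. SS \<beta>0 n h k) \<in> borel_measurable (hist_space n)"
  unfolding SS_def by (intro borel_measurable_sum borel_measurable_times borel_measurable_diff hcomp_fst hcomp_snd hcomp_inner) auto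
lemma MM_meas[measurable]: "(\<lambda>h. MM \<beta>0 \<sigma>2 l k n h) \<in> borel_measurable (hist_space n)"
  unfolding MM_def by measurable

lemma normal_mgf:
  assumes "s > 0"
  shows "(\<integral>\<^sup>+y. ennreal (normal_density \<mu> s y) * ennreal (exp (a * (y - \<mu>) - a\<^sup>2 * s\<^sup>2 / 2)) \<partial>lborel) = 1"
proof -
  have eq: "normal_density \<mu> s y * exp (a * (y - \<mu>) - a\<^sup>2 * s\<^sup>2 / 2) = normal_density (\<mu> + a * s\<^sup>2) s y" for y
  proof -
    have "-(y - \<mu>)\<^sup>2/ (2 * s\<^sup>2) + (a * (y - \<mu>) - a\<^sup>2 * s\<^sup>2 / 2) = -(y - (\<mu> + a * s\<^sup>2))\<^sup>2/ (2 * s\<^sup>2)"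
      using assms by (simp add: field_simps power2_eq_square)
    then show ?thesis unfolding normal_density_def
      by (simp add: mult.assoc exp_add[symmetric])
  qed
  have "(\<integral>\<^sup>+y. ennreal (normal_density \<mu> s y) * ennreal (exp (a * (y - \<mu>) - a\<^sup>2 * s\<^sup>2 / 2)) \<partial>lborel)
      = (\<integral>\<^sup>+y. ennreal (normal_density (\<mu> + a * s\<^sup>2) s y) \<partial>lborel)"
    by (intro nn_integral_cong) (simp add: ennreal_mult'[symmetric] eq)
  also have "\<dots> = 1"
    using prob_space.emeasure_space_1[OF prob_space_normal_density[OF assms, of "\<mu> + a * s\<^sup>2"]]
    by (simp add: emeasure_density)
  finally show ?thesis .
qed

lemma MM_nonneg: "MM \<beta>0 \<sigma>2 l k n h \<ge> 0" unfolding MM_def by simp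

lemma sum_upd_lt: "(\<Sum>i<(j::nat). f ((h(j := v)) i)) = (\<Sum>i<j. f (h i))"
  by (rule sum.cong) (auto simp: less_irrefl)

lemma MM_upd:
  "MM \<beta>0 \<sigma>2 l k (Suc j) (h(j := (x, y))) = MM \<beta>0 \<sigma>2 l k j h * exp (l * x $ k * (y - x \<bullet> \<beta>0) - (l * x $ k)\<^sup>2 * (sqrt \<sigma>2)\<^sup>2 / 2)"
  if "\<sigma>2 > 0"
proof -
  have N: "NN (Suc j) (h(j := (x, y))) k = NN j h k + (x $ k)\<^sup>2"
    unfolding NN_def by (simp add: sum.lessThan_Suc sum_upd_lt[where f="\<lambda>p. (fst p $ k)\<^sup>2"])
  have S: "SS \<beta>0 (Suc j) (h(j := (x, y))) k = SS \<beta>0 j h k + x $ k * (y - x \<bullet> \<beta>0)"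
    unfolding SS_def by (simp add: sum.lessThan_Suc sum_upd_lt[where f="\<lambda>p. fst p $ k * (snd p - fst p \<bullet> \<beta>0)"])
  show ?thesis unfolding MM_def N S using that
    by (simp add: exp_add[symmetric] algebra_simps power2_eq_square)
qed

lemma upd_meas:
  assumes "h \<in> space (hist_space j)"
  shows "(\<lambda>y. h(j := (x, y))) \<in> borel \<rightarrow>\<^sub>M hist_space (Suc j)"
  using measurable_Pair2[OF meas_upd[of j 0], of "(h,x)"] assms
  by (simp add: space_pair_measure)

lemma mart:
  fixes \<Lambda> :: "nat \<Rightarrow> 'p::finite hist \<Rightarrow> (real^'p) measure"
  assumes V: "valid_rule \<Lambda>" and s2: "\<sigma>2 > 0"
  shows "(\<integral>\<^sup>+h. ennreal (MM \<beta>0 \<sigma>2 l k n h) \<partial>traj \<Lambda> \<beta>0 \<sigma>2 n) = 1"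
proof (induction n)
  case 0
  have "(\<lambda>_. undefined) \<in> space (hist_space 0 :: 'p hist measure)" by (simp add: space_hist_space)
  then show ?case by (simp add: nn_integral_return MM_def NN_def SS_def)
next
  case (Suc j)
  have S: "sets (traj \<Lambda> \<beta>0 \<sigma>2 j) = sets (hist_space j)" using traj_facts[OF V s2] by auto
  have sp: "space (traj \<Lambda> \<beta>0 \<sigma>2 j) = space (hist_space j)" using S by (rule sets_eq_imp_space_eq)
  have K': "kern \<Lambda> \<beta>0 \<sigma>2 j \<in> traj \<Lambda> \<beta>0 \<sigma>2 j \<rightarrow>\<^sub>M subprob_algebra (hist_space (Suc j))"
    by (subst measurable_cong_sets[OF S refl]) (rule measurable_prob_algebraD[OF kern_meas[OF V s2]])
  have s: "sqrt \<sigma>2 > 0" using s2 by simp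
  have inner: "(\<integral>\<^sup>+h'. ennreal (MM \<beta>0 \<sigma>2 l k (Suc j) h') \<partial>kern \<Lambda> \<beta>0 \<sigma>2 j h) = ennreal (MM \<beta>0 \<sigma>2 l k j h)"
    if h: "h \<in> space (hist_space j)" for h
  proof -
    let ?G = "\<lambda>x. distr (density lborel (normal_density (x \<bullet> \<beta>0) (sqrt \<sigma>2))) (hist_space (Suc j)) (\<lambda>y. h(j := (x, y)))"
    have Lh: "\<Lambda> j h \<in> space (prob_algebra borel)"
      using V h unfolding valid_rule_def by (auto dest: measurable_space)
    then have LS: "sets (\<Lambda> j h) = sets borel" and LP: "prob_space (\<Lambda> j h)"
      by (auto simp: space_prob_algebra)
    have G: "?G \<in> borel \<rightarrow>\<^sub>M subprob_algebra (hist_space (Suc j))"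
      using measurable_Pair2[OF measurable_prob_algebraD[OF kern_inner_meas[OF s2, of \<beta>0 j]] h] by simp
    have G': "?G \<in> \<Lambda> j h \<rightarrow>\<^sub>M subprob_algebra (hist_space (Suc j))"
      by (subst measurable_cong_sets[OF LS refl]) (rule G)
    have "(\<integral>\<^sup>+h'. ennreal (MM \<beta>0 \<sigma>2 l k (Suc j) h') \<partial>kern \<Lambda> \<beta>0 \<sigma>2 j h)
        = (\<integral>\<^sup>+x. (\<integral>\<^sup>+h'. ennreal (MM \<beta>0 \<sigma>2 l k (Suc j) h') \<partial>?G x) \<partial>\<Lambda> j h)"
      unfolding kern_def by (rule nn_integral_bind[OF _ G']) simp
    also have "\<dots> = (\<integral>\<^sup>+x. ennreal (MM \<beta>0 \<sigma>2 l k j h) \<partial>\<Lambda> j h)"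
    proof (rule nn_integral_cong)
      fix x
      have F: "(\<lambda>y. h(j := (x, y))) \<in> density lborel (normal_density (x \<bullet> \<beta>0) (sqrt \<sigma>2)) \<rightarrow>\<^sub>M hist_space (Suc j)"
        using upd_meas[OF h, of x] by simp
      have "(\<integral>\<^sup>+h'. ennreal (MM \<beta>0 \<sigma>2 l k (Suc j) h') \<partial>?G x)
          = (\<integral>\<^sup>+y. ennreal (MM \<beta>0 \<sigma>2 l k (Suc j) (h(j := (x, y)))) \<partial>density lborel (normal_density (x \<bullet> \<beta>0) (sqrt \<sigma>2)))"
        by (rule nn_integral_distr[OF F]) simp
      also have "\<dots> = (\<integral>\<^sup>+y. ennreal (normal_density (x \<bullet> \<beta>0) (sqrt \<sigma>2) y) * ennreal (MM \<beta>0 \<sigma>2 l k (Suc j) (h(j := (x, y)))) \<partial>lborel)"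
        by (rule nn_integral_density) (auto intro!: measurable_compose[OF upd_meas[OF h, of x]])
      also have "\<dots> = (\<integral>\<^sup>+y. ennreal (MM \<beta>0 \<sigma>2 l k j h) * (ennreal (normal_density (x \<bullet> \<beta>0) (sqrt \<sigma>2) y) * ennreal (exp (l * x $ k * (y - x \<bullet> \<beta>0) - (l * x $ k)\<^sup>2 * (sqrt \<sigma>2)\<^sup>2 / 2))) \<partial>lborel)"
        by (intro nn_integral_cong) (simp only: MM_upd[OF s2], simp add: ennreal_mult MM_nonneg mult_ac)
      also have "\<dots> = ennreal (MM \<beta>0 \<sigma>2 l k j h) * (\<integral>\<^sup>+y. ennreal (normal_density (x \<bullet> \<beta>0) (sqrt \<sigma>2) y) * ennreal (exp (l * x $ k * (y - x \<bullet> \<beta>0) - (l * x $ k)\<^sup>2 * (sqrt \<sigma>2)\<^sup>2 / 2)) \<partial>lborel)"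
        by (rule nn_integral_cmult) simp
      also have "\<dots> = ennreal (MM \<beta>0 \<sigma>2 l k j h)"
        by (simp add: normal_mgf[OF s])
      finally show "(\<integral>\<^sup>+h'. ennreal (MM \<beta>0 \<sigma>2 l k (Suc j) h') \<partial>?G x) = ennreal (MM \<beta>0 \<sigma>2 l k j h)" .
    qed
    also have "\<dots> = ennreal (MM \<beta>0 \<sigma>2 l k j h)"
      using prob_space.emeasure_space_1[OF LP] by simp
    finally show ?thesis .
  qed
  have "(\<integral>\<^sup>+h. ennreal (MM \<beta>0 \<sigma>2 l k (Suc j) h) \<partial>traj \<Lambda> \<beta>0 \<sigma>2 (Suc j))
      = (\<integral>\<^sup>+h. (\<integral>\<^sup>+h'. ennreal (MM \<beta>0 \<sigma>2 l k (Suc j) h') \<partial>kern \<Lambda> \<beta>0 \<sigma>2 j h) \<partial>traj \<Lambda> \<beta>0 \<sigma>2 j)"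
    unfolding traj_Suc' by (rule nn_integral_bind[OF _ K']) simp
  also have "\<dots> = (\<integral>\<^sup>+h. ennreal (MM \<beta>0 \<sigma>2 l k j h) \<partial>traj \<Lambda> \<beta>0 \<sigma>2 j)"
    by (rule nn_integral_cong) (simp add: inner sp)
  also have "\<dots> = 1" by (rule Suc.IH)
  finally show ?case .
qed

lemma tail_bound:
  fixes \<Lambda> :: "nat \<Rightarrow> 'p::finite hist \<Rightarrow> (real^'p) measure"
  assumes V: "valid_rule \<Lambda>" and s2: "\<sigma>2 > 0" and d: "\<delta> > 0" and r: "r \<ge> 0" and s: "s\<^sup>2 = (1::real)"
  shows "emeasure (traj \<Lambda> \<beta>0 \<sigma>2 n) {h \<in> space (traj \<Lambda> \<beta>0 \<sigma>2 n). NN n h k > r \<and> s * SS \<beta>0 n h k \<ge> \<delta> * NN n h k}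
         \<le> ennreal (exp (- (r * \<delta>\<^sup>2 / (2 * \<sigma>2))))"
proof -
  let ?P = "traj \<Lambda> \<beta>0 \<sigma>2 n"
  let ?A = "{h \<in> space ?P. NN n h k > r \<and> s * SS \<beta>0 n h k \<ge> \<delta> * NN n h k}"
  let ?c = "r * \<delta>\<^sup>2 / (2 * \<sigma>2)"
  let ?l = "s * \<delta> / \<sigma>2"
  have S: "sets ?P = sets (hist_space n)" using traj_facts[OF V s2] by auto
  have sp: "space ?P = space (hist_space n)" using S by (rule sets_eq_imp_space_eq)
  have m1: "(\<lambda>h. \<delta> * NN n h k) \<in> borel_measurable (hist_space n)" by (intro borel_measurable_times borel_measurable_const NN_meas)
  have m2: "(\<lambda>h. s * SS \<beta>0 n h k) \<in> borel_measurable (hist_space n)" by (intro borel_measurable_times borel_measurable_const SS_meas)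
  have "?A = {h \<in> space (hist_space n). r < NN n h k} \<inter> {h \<in> space (hist_space n). \<delta> * NN n h k \<le> s * SS \<beta>0 n h k}"
    unfolding sp by auto
  also have "\<dots> \<in> sets (hist_space n)"
    by (intro sets.Int borel_measurable_less borel_measurable_le m1 m2 NN_meas borel_measurable_const)
  finally have Ameas: "?A \<in> sets ?P" unfolding S .
  have aux: "\<And>X Y a c::real. a \<le> X \<Longrightarrow> Y = a/2 \<Longrightarrow> c \<le> a/2 \<Longrightarrow> 0 \<le> -c + (X - Y)" by linarith
  have pt: "indicator ?A h \<le> ennreal (exp (- ?c)) * ennreal (MM \<beta>0 \<sigma>2 ?l k n h)" for h
  proof (cases "h \<in> ?A")
    case True
    then have N: "NN n h k > r" and SN: "s * SS \<beta>0 n h k \<ge> \<delta> * NN n h k" by auto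
    have "?l * SS \<beta>0 n h k = (\<delta> / \<sigma>2) * (s * SS \<beta>0 n h k)" by (simp add: field_simps)
    also have "\<dots> \<ge> (\<delta> / \<sigma>2) * (\<delta> * NN n h k)" using SN d s2 by (intro mult_left_mono) auto
    finally have 1: "?l * SS \<beta>0 n h k \<ge> \<delta>\<^sup>2 * NN n h k / \<sigma>2" by (simp add: power2_eq_square)
    have 2: "?l\<^sup>2 * \<sigma>2 * NN n h k / 2 = (\<delta>\<^sup>2 * NN n h k / \<sigma>2) / 2"
      using s s2 by (simp add: power_mult_distrib power_divide field_simps power2_eq_square)
    have 3: "(\<delta>\<^sup>2 * NN n h k / \<sigma>2) / 2 \<ge> ?c" using N s2 d
      by (simp add: field_simps mult_left_mono)
    have "- ?c + (?l * SS \<beta>0 n h k - ?l\<^sup>2 * \<sigma>2 * NN n h k / 2) \<ge> 0"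
      using 1 2 3 by (metis (no_types) aux)
    then have "exp (- ?c) * MM \<beta>0 \<sigma>2 ?l k n h \<ge> 1"
      unfolding MM_def by (simp add: exp_add[symmetric])
    then have "ennreal 1 \<le> ennreal (exp (- ?c) * MM \<beta>0 \<sigma>2 ?l k n h)" by (rule ennreal_leI)
    also have "\<dots> = ennreal (exp (- ?c)) * ennreal (MM \<beta>0 \<sigma>2 ?l k n h)"
      by (rule ennreal_mult) (auto simp: MM_nonneg)
    finally show ?thesis using True by simp
  next
    case False
    then show ?thesis by simp
  qed
  have "emeasure ?P ?A = (\<integral>\<^sup>+h. indicator ?A h \<partial>?P)" using Ameas by simp
  also have "\<dots> \<le> (\<integral>\<^sup>+h. ennreal (exp (- ?c)) * ennreal (MM \<beta>0 \<sigma>2 ?l k n h) \<partial>?P)"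
    by (rule nn_integral_mono) (rule pt)
  also have "\<dots> = ennreal (exp (- ?c)) * (\<integral>\<^sup>+h. ennreal (MM \<beta>0 \<sigma>2 ?l k n h) \<partial>?P)"
    by (rule nn_integral_cmult) (simp add: measurable_cong_sets[OF S refl])
  also have "\<dots> = ennreal (exp (- ?c))" by (simp add: mart[OF V s2])
  finally show ?thesis .
qed

lemma Basis_vec_image: "(Basis :: (real^'p::finite) set) = (\<lambda>k. axis k 1) ` UNIV"
  by (auto simp: Basis_vec_def)

lemma inj_axis1: "inj (\<lambda>k::'p::finite. axis k (1::real))"
  by (auto simp: inj_def axis_eq_axis)

lemma nn_integral_vec_prod:
  fixes F :: "'p::finite \<Rightarrow> real \<Rightarrow> ennreal"
  assumes [measurable]: "\<And>k. F k \<in> borel_measurable borel"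
  shows "(\<integral>\<^sup>+\<beta>. (\<Prod>k\<in>UNIV. F k (\<beta> $ k)) \<partial>(lborel :: (real^'p) measure)) = (\<Prod>k\<in>UNIV. (\<integral>\<^sup>+x. F k x \<partial>lborel))"
proof -
  define G where "G b = F (inv (\<lambda>k. axis k (1::real)) b)" for b :: "real^'p"
  have G: "G (axis k 1) = F k" for k
  proof -
    have "inv (\<lambda>k. axis k (1::real)) (axis k 1) = k" by (rule inv_f_f[OF inj_axis1])
    then show ?thesis unfolding G_def by simp
  qed
  have 1: "(\<Prod>b\<in>Basis. G b (\<beta> \<bullet> b)) = (\<Prod>k\<in>UNIV. F k (\<beta> $ k))" for \<beta> :: "real^'p"
    unfolding Basis_vec_image by (subst prod.reindex[OF inj_axis1]) (simp add: G cart_eq_inner_axis)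
  have 2: "(\<Prod>b\<in>Basis. (\<integral>\<^sup>+x. G b x \<partial>lborel)) = (\<Prod>k\<in>UNIV. (\<integral>\<^sup>+x. F k x \<partial>lborel))"
    unfolding Basis_vec_image by (subst prod.reindex[OF inj_axis1]) (simp add: G)
  have "(\<integral>\<^sup>+\<beta>. (\<Prod>b\<in>Basis. G b (\<beta> \<bullet> b)) \<partial>(lborel :: (real^'p) measure)) = (\<Prod>b\<in>Basis. (\<integral>\<^sup>+x. G b x \<partial>lborel))"
    by (rule nn_integral_lborel_prod) (auto simp: G_def)
  then show ?thesis unfolding 1 2 .
qed

definition gdens :: "real^'p::finite \<Rightarrow> ('p \<Rightarrow> real) \<Rightarrow> real^'p \<Rightarrow> real" where
  "gdens m s \<beta> = (\<Prod>k\<in>UNIV. normal_density (m $ k) (s k) (\<beta> $ k))"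

lemma gdens_nonneg: "gdens m s \<beta> \<ge> 0"
  unfolding gdens_def by (intro prod_nonneg) auto

lemma gdens_meas[measurable]: "gdens m s \<in> borel_measurable borel"
  unfolding gdens_def[abs_def] normal_density_def by measurable

lemma gdens_nn:
  fixes m :: "real^'p::finite"
  assumes "\<And>k. s k > 0"
  shows "(\<integral>\<^sup>+\<beta>. ennreal (gdens m s \<beta>) \<partial>lborel) = 1"
proof -
  have "(\<integral>\<^sup>+\<beta>. ennreal (gdens m s \<beta>) \<partial>lborel) = (\<integral>\<^sup>+\<beta>. (\<Prod>k\<in>UNIV. ennreal (normal_density (m $ k) (s k) (\<beta> $ k))) \<partial>(lborel :: (real^'p) measure))"
    unfolding gdens_def by (simp add: prod_ennreal)
  also have "\<dots> = (\<Prod>k\<in>UNIV. (\<integral>\<^sup>+x. ennreal (normal_density (m $ k) (s k) x) \<partial>lborel))"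
    by (rule nn_integral_vec_prod) (simp add: normal_density_def)
  also have "\<dots> = (\<Prod>k\<in>(UNIV::'p set). 1)"
  proof -
    have "(\<integral>\<^sup>+x. ennreal (normal_density (m $ k) (s k) x) \<partial>lborel) = 1" for k
      using prob_space.emeasure_space_1[OF prob_space_normal_density[OF assms[of k], of "m $ k"]]
      by (simp add: emeasure_density)
    then show ?thesis by simp
  qed
  finally show ?thesis by simp
qed

lemma gdens_integrable:
  fixes m :: "real^'p::finite"
  assumes "\<And>k. s k > 0"
  shows "integrable lborel (gdens m s)" and "(\<integral>\<beta>. gdens m s \<beta> \<partial>lborel) = 1"
proof -
  show "integrable lborel (gdens m s)"
    by (rule integrableI_nonneg) (auto simp: gdens_nonneg gdens_nn[OF assms])
  then show "(\<integral>\<beta>. gdens m s \<beta> \<partial>lborel) = 1"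
    by (subst integral_eq_nn_integral) (auto simp: gdens_nonneg gdens_nn[OF assms])
qed

lemma normal_tail:
  assumes "s > 0" "t > 0"
  shows "(\<integral>\<^sup>+x. ennreal (normal_density \<mu> s x) * indicator {x. t \<le> \<bar>x - \<mu>\<bar>} x \<partial>lborel) \<le> ennreal (s\<^sup>2 / t\<^sup>2)"
proof -
  have "(\<integral>\<^sup>+x. ennreal (normal_density \<mu> s x) * indicator {x. t \<le> \<bar>x - \<mu>\<bar>} x \<partial>lborel)
      \<le> (\<integral>\<^sup>+x. ennreal (normal_density \<mu> s x * (x - \<mu>) ^ (2 * 1) / t\<^sup>2) \<partial>lborel)"
  proof (rule nn_integral_mono)
    fix x
    show "ennreal (normal_density \<mu> s x) * indicator {x. t \<le> \<bar>x - \<mu>\<bar>} x \<le> ennreal (normal_density \<mu> s x * (x - \<mu>) ^ (2 * 1) / t\<^sup>2)"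
    proof (cases "t \<le> \<bar>x - \<mu>\<bar>")
      case True
      then have "t\<^sup>2 \<le> (x - \<mu>)\<^sup>2" using assms
        by (metis abs_le_square_iff abs_of_pos)
      then have "1 \<le> (x - \<mu>)\<^sup>2 / t\<^sup>2" using assms by simp
      then have "normal_density \<mu> s x \<le> normal_density \<mu> s x * ((x - \<mu>)\<^sup>2 / t\<^sup>2)"
        using normal_density_nonneg[of \<mu> s x] by (metis mult.right_neutral mult_left_mono)
      then show ?thesis using True by (simp add: ennreal_leI)
    qed simp
  qed
  also have "\<dots> = ennreal (s\<^sup>2 / t\<^sup>2)"
  proof -
    have hb: "has_bochner_integral lborel (\<lambda>x. normal_density \<mu> s x * (x - \<mu>) ^ (2 * 1)) (s\<^sup>2)"
      using normal_moment_even[where k=1 and \<mu>=\<mu> and \<sigma>=s, OF assms(1)] by (simp add: field_simps)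
    have "has_bochner_integral lborel (\<lambda>x. normal_density \<mu> s x * (x - \<mu>) ^ (2 * 1) / t\<^sup>2) (s\<^sup>2 / t\<^sup>2)"
      by (rule has_bochner_integral_divide_zero[OF hb])
    then have "integrable lborel (\<lambda>x. normal_density \<mu> s x * (x - \<mu>) ^ (2 * 1) / t\<^sup>2)"
      and "(\<integral>x. normal_density \<mu> s x * (x - \<mu>) ^ (2 * 1) / t\<^sup>2 \<partial>lborel) = s\<^sup>2 / t\<^sup>2"
      by (auto simp: has_bochner_integral_iff)
    then show ?thesis
      by (subst nn_integral_eq_integral) (auto simp: normal_density_nonneg)
  qed
  finally show ?thesis .
qed

lemma gdens_tail:
  fixes m :: "real^'p::finite"
  assumes s: "\<And>k. s k > 0" and t: "t > 0"
  shows "(\<integral>\<^sup>+\<beta>. ennreal (gdens m s \<beta>) * indicator {\<beta>. t \<le> \<bar>\<beta> $ k - m $ k\<bar>} \<beta> \<partial>lborel) \<le> ennreal ((s k)\<^sup>2 / t\<^sup>2)"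
proof -
  define F where "F k' x = ennreal (normal_density (m $ k') (s k') x) * (if k' = k then indicator {x. t \<le> \<bar>x - m $ k\<bar>} x else 1)" for k' x
  have pt: "ennreal (gdens m s \<beta>) * indicator {\<beta>. t \<le> \<bar>\<beta> $ k - m $ k\<bar>} \<beta> = (\<Prod>k'\<in>UNIV. F k' (\<beta> $ k'))" for \<beta> :: "real^'p"
  proof -
    have "(\<Prod>k'\<in>UNIV. F k' (\<beta> $ k')) = (\<Prod>k'\<in>UNIV. ennreal (normal_density (m $ k') (s k') (\<beta> $ k'))) *
            (\<Prod>k'\<in>UNIV. (if k' = k then indicator {x. t \<le> \<bar>x - m $ k\<bar>} (\<beta> $ k') else (1::ennreal)))"
      unfolding F_def by (rule prod.distrib)
    also have "\<dots> = ennreal (gdens m s \<beta>) * indicator {\<beta>. t \<le> \<bar>\<beta> $ k - m $ k\<bar>} \<beta>"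
      unfolding gdens_def by (simp add: prod_ennreal indicator_def)
    finally show ?thesis by simp
  qed
  have Fm: "F k' \<in> borel_measurable borel" for k'
    unfolding F_def normal_density_def by measurable
  have "(\<integral>\<^sup>+\<beta>. ennreal (gdens m s \<beta>) * indicator {\<beta>. t \<le> \<bar>\<beta> $ k - m $ k\<bar>} \<beta> \<partial>lborel)
      = (\<Prod>k'\<in>UNIV. (\<integral>\<^sup>+x. F k' x \<partial>lborel))"
    unfolding pt by (rule nn_integral_vec_prod[OF Fm])
  also have "\<dots> = (\<integral>\<^sup>+x. F k x \<partial>lborel) * (\<Prod>k'\<in>UNIV - {k}. (\<integral>\<^sup>+x. F k' x \<partial>lborel))"
    by (subst prod.remove[of UNIV k]) auto
  also have "(\<Prod>k'\<in>UNIV - {k}. (\<integral>\<^sup>+x. F k' x \<partial>lborel)) = 1"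
  proof -
    have "(\<integral>\<^sup>+x. F k' x \<partial>lborel) = 1" if "k' \<in> UNIV - {k}" for k'
    proof -
      have "(\<integral>\<^sup>+x. F k' x \<partial>lborel) = (\<integral>\<^sup>+x. ennreal (normal_density (m $ k') (s k') x) \<partial>lborel)"
        using that unfolding F_def by simp
      also have "\<dots> = 1"
        using prob_space.emeasure_space_1[OF prob_space_normal_density[OF s[of k'], of "m $ k'"]]
        by (simp add: emeasure_density)
      finally show ?thesis .
    qed
    then show ?thesis by (simp add: prod.neutral)
  qed
  also have "(\<integral>\<^sup>+x. F k x \<partial>lborel) \<le> ennreal ((s k)\<^sup>2 / t\<^sup>2)"
    unfolding F_def using normal_tail[OF s t, of "m $ k"] by simp
  finally show ?thesis by simp
qed

lemma measure_density_real:
  fixes f :: "'a::euclidean_space \<Rightarrow> real"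
  assumes f: "integrable lborel f" "\<And>x. f x \<ge> 0" and A: "A \<in> sets lborel"
  shows "measure (density lborel (\<lambda>x. ennreal (f x))) A = (\<integral>x. f x * indicator A x \<partial>lborel)"
proof -
  have fm: "f \<in> borel_measurable lborel" using f by auto
  have "emeasure (density lborel (\<lambda>x. ennreal (f x))) A = (\<integral>\<^sup>+x. ennreal (f x) * indicator A x \<partial>lborel)"
    using fm A by (subst emeasure_density) auto
  also have "\<dots> = (\<integral>\<^sup>+x. ennreal (f x * indicator A x) \<partial>lborel)"
    by (intro nn_integral_cong) (simp add: indicator_def)
  also have "\<dots> = ennreal (\<integral>x. f x * indicator A x \<partial>lborel)"
  proof (rule nn_integral_eq_integral)
    show "integrable lborel (\<lambda>x. f x * indicator A x)"
      using integrable_mult_indicator[OF A f(1)] by (simp add: mult.commute)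
  qed (use f in \<open>auto simp: indicator_def\<close>)
  finally show ?thesis unfolding measure_def
    using f by (simp add: integral_nonneg_AE)
qed

lemma tv_le_L1:
  fixes f g :: "'a::euclidean_space \<Rightarrow> real"
  assumes f: "integrable lborel f" "\<And>x. f x \<ge> 0" and g: "integrable lborel g" "\<And>x. g x \<ge> 0"
  shows "tv_dist (density lborel (\<lambda>x. ennreal (f x))) (density lborel (\<lambda>x. ennreal (g x))) \<le> (\<integral>x. \<bar>f x - g x\<bar> \<partial>lborel)"
  unfolding tv_dist_def
proof (rule cSUP_least)
  show "sets (density lborel (\<lambda>x. ennreal (f x))) \<noteq> {}" by auto
next
  fix A assume "A \<in> sets (density lborel (\<lambda>x. ennreal (f x)))"
  then have A: "A \<in> sets lborel" by simp
  have iA: "integrable lborel (\<lambda>x. h x * indicator A x)" if "integrable lborel h" for h :: "'a \<Rightarrow> real"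
    using integrable_mult_indicator[OF A that] by (simp add: mult.commute)
  have "\<bar>measure (density lborel (\<lambda>x. ennreal (f x))) A - measure (density lborel (\<lambda>x. ennreal (g x))) A\<bar>
      = \<bar>(\<integral>x. f x * indicator A x \<partial>lborel) - (\<integral>x. g x * indicator A x \<partial>lborel)\<bar>"
    using measure_density_real[OF f A] measure_density_real[OF g A] by simp
  also have "\<dots> = \<bar>\<integral>x. (f x - g x) * indicator A x \<partial>lborel\<bar>"
    using iA[OF f(1)] iA[OF g(1)] by (simp add: left_diff_distrib)
  also have "\<dots> \<le> (\<integral>x. \<bar>(f x - g x) * indicator A x\<bar> \<partial>lborel)"
    by (rule integral_abs_bound)
  also have "\<dots> \<le> (\<integral>x. \<bar>f x - g x\<bar> \<partial>lborel)"
    using f g iA by (intro integral_mono) (auto simp: indicator_def intro!: integrable_abs)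
  finally show "\<bar>measure (density lborel (\<lambda>x. ennreal (f x))) A - measure (density lborel (\<lambda>x. ennreal (g x))) A\<bar> \<le> (\<integral>x. \<bar>f x - g x\<bar> \<partial>lborel)" .
qed

lemma bvm_core:
  fixes \<pi> g :: "real^'p::finite \<Rightarrow> real"
  assumes gm: "g \<in> borel_measurable borel" and g0: "\<And>\<beta>. g \<beta> \<ge> 0" and gi: "integrable lborel g"
    and g1: "(\<integral>\<beta>. g \<beta> \<partial>lborel) = 1"
    and pm: "\<pi> \<in> borel_measurable borel" and pB: "\<And>\<beta>. \<bar>\<pi> \<beta>\<bar> \<le> B" and p0: "\<pi>0 > 0"
    and D: "(\<integral>\<beta>. g \<beta> * \<bar>\<pi> \<beta> - \<pi>0\<bar> \<partial>lborel) \<le> Dv" and Dv: "Dv \<le> \<pi>0 / 2"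
  shows "(\<integral>\<beta>. \<pi> \<beta> * g \<beta> \<partial>lborel) \<ge> \<pi>0 / 2"
    and "(\<integral>\<beta>. \<bar>\<pi> \<beta> * g \<beta> / (\<integral>b. \<pi> b * g b \<partial>lborel) - g \<beta>\<bar> \<partial>lborel) \<le> 4 * Dv / \<pi>0"
proof -
  have gm': "g \<in> borel_measurable lborel" using gm by simp
  have pm': "\<pi> \<in> borel_measurable lborel" using pm by simp
  have bb: "\<bar>\<pi> x\<bar> * g x \<le> \<bar>B\<bar> * g x" for x
    using pB[of x] g0[of x] by (meson abs_ge_self mult_right_mono order_trans)
  have i1: "integrable lborel (\<lambda>\<beta>. \<pi> \<beta> * g \<beta>)"
    by (rule Bochner_Integration.integrable_bound[where f="\<lambda>\<beta>. B * g \<beta>"])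
       (use gi gm' pm' bb g0 in \<open>auto simp: abs_mult abs_of_nonneg\<close>)
  have bb2: "g x * \<bar>\<pi> x - \<pi>0\<bar> \<le> g x * \<bar>B + \<bar>\<pi>0\<bar>\<bar>" for x
  proof -
    have "\<bar>\<pi> x - \<pi>0\<bar> \<le> \<bar>B + \<bar>\<pi>0\<bar>\<bar>" using pB[of x] by linarith
    then show ?thesis using g0[of x] by (rule mult_left_mono)
  qed
  have i2: "integrable lborel (\<lambda>\<beta>. g \<beta> * \<bar>\<pi> \<beta> - \<pi>0\<bar>)"
    by (rule Bochner_Integration.integrable_bound[where f="\<lambda>\<beta>. (B + \<bar>\<pi>0\<bar>) * g \<beta>"])
       (use gi gm' pm' bb2 g0 in \<open>auto simp: abs_mult abs_of_nonneg mult.commute\<close>)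
  define Z where "Z = (\<integral>\<beta>. \<pi> \<beta> * g \<beta> \<partial>lborel)"
  have "\<pi>0 - Z = (\<integral>\<beta>. g \<beta> * (\<pi>0 - \<pi> \<beta>) \<partial>lborel)"
    unfolding Z_def using i1 gi g1 by (simp add: right_diff_distrib mult.commute)
  then have "\<bar>\<pi>0 - Z\<bar> \<le> (\<integral>\<beta>. \<bar>g \<beta> * (\<pi>0 - \<pi> \<beta>)\<bar> \<partial>lborel)"
    by (simp add: integral_abs_bound)
  also have "\<dots> = (\<integral>\<beta>. g \<beta> * \<bar>\<pi> \<beta> - \<pi>0\<bar> \<partial>lborel)"
    using g0 by (intro Bochner_Integration.integral_cong) (auto simp: abs_mult abs_minus_commute)
  finally have PZ: "\<bar>\<pi>0 - Z\<bar> \<le> Dv" using D by linarith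
  then have Zge: "Z \<ge> \<pi>0 / 2" using Dv by linarith
  then show "(\<integral>\<beta>. \<pi> \<beta> * g \<beta> \<partial>lborel) \<ge> \<pi>0 / 2" unfolding Z_def .
  have Zpos: "Z > 0" using Zge p0 by linarith
  have pt: "\<bar>\<pi> \<beta> * g \<beta> / Z - g \<beta>\<bar> \<le> (g \<beta> * \<bar>\<pi> \<beta> - \<pi>0\<bar> + Dv * g \<beta>) / Z" for \<beta>
  proof -
    have "\<pi> \<beta> * g \<beta> / Z - g \<beta> = g \<beta> * (\<pi> \<beta> - Z) / Z"
      using Zpos by (simp add: field_simps)
    then have "\<bar>\<pi> \<beta> * g \<beta> / Z - g \<beta>\<bar> = g \<beta> * \<bar>\<pi> \<beta> - Z\<bar> / Z"
      using Zpos g0[of \<beta>] by (simp add: abs_mult abs_divide)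
    also have "\<dots> \<le> g \<beta> * (\<bar>\<pi> \<beta> - \<pi>0\<bar> + Dv) / Z"
      using Zpos g0[of \<beta>] PZ
      by (intro divide_right_mono mult_left_mono) (auto intro: order_trans[OF abs_triangle_ineq[of "\<pi> \<beta> - \<pi>0" "\<pi>0 - Z", simplified]])
    finally show ?thesis by (simp add: algebra_simps)
  qed
  have "(\<integral>\<beta>. \<bar>\<pi> \<beta> * g \<beta> / Z - g \<beta>\<bar> \<partial>lborel) \<le> (\<integral>\<beta>. (g \<beta> * \<bar>\<pi> \<beta> - \<pi>0\<bar> + Dv * g \<beta>) / Z \<partial>lborel)"
  proof (rule integral_mono)
    show "integrable lborel (\<lambda>\<beta>. (g \<beta> * \<bar>\<pi> \<beta> - \<pi>0\<bar> + Dv * g \<beta>) / Z)"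
      using i2 gi by auto
    show "integrable lborel (\<lambda>\<beta>. \<bar>\<pi> \<beta> * g \<beta> / Z - g \<beta>\<bar>)"
      using i1 gi by auto
  qed (rule pt)
  also have "\<dots> = ((\<integral>\<beta>. g \<beta> * \<bar>\<pi> \<beta> - \<pi>0\<bar> \<partial>lborel) + Dv) / Z"
    using i2 gi g1 by simp
  also have "\<dots> \<le> (Dv + Dv) / Z"
    using D Zpos by (intro divide_right_mono) auto
  also have "\<dots> \<le> (Dv + Dv) / (\<pi>0 / 2)"
  proof (rule divide_left_mono)
    show "0 \<le> Dv + Dv" using PZ by linarith
  qed (use Zge p0 Zpos in auto)
  also have "\<dots> = 4 * Dv / \<pi>0" by (simp add: field_simps)
  finally show "(\<integral>\<beta>. \<bar>\<pi> \<beta> * g \<beta> / (\<integral>b. \<pi> b * g b \<partial>lborel) - g \<beta>\<bar> \<partial>lborel) \<le> 4 * Dv / \<pi>0"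
    unfolding Z_def .
qed

lemma gdens_tail_real:
  fixes m :: "real^'p::finite"
  assumes s: "\<And>k. s k > 0" and t: "t > 0"
  shows "integrable lborel (\<lambda>\<beta>. gdens m s \<beta> * indicator {\<beta>. t \<le> \<bar>\<beta> $ k - m $ k\<bar>} \<beta>)"
    and "(\<integral>\<beta>. gdens m s \<beta> * indicator {\<beta>. t \<le> \<bar>\<beta> $ k - m $ k\<bar>} \<beta> \<partial>lborel) \<le> (s k)\<^sup>2 / t\<^sup>2"
proof -
  have A: "{\<beta>::real^'p. t \<le> \<bar>\<beta> $ k - m $ k\<bar>} \<in> sets lborel" by measurable
  show I: "integrable lborel (\<lambda>\<beta>. gdens m s \<beta> * indicator {\<beta>. t \<le> \<bar>\<beta> $ k - m $ k\<bar>} \<beta>)"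
    using integrable_mult_indicator[OF A gdens_integrable(1)[OF s, of m]] by (simp add: mult.commute)
  have "ennreal (\<integral>\<beta>. gdens m s \<beta> * indicator {\<beta>. t \<le> \<bar>\<beta> $ k - m $ k\<bar>} \<beta> \<partial>lborel)
      = (\<integral>\<^sup>+\<beta>. ennreal (gdens m s \<beta> * indicator {\<beta>. t \<le> \<bar>\<beta> $ k - m $ k\<bar>} \<beta>) \<partial>lborel)"
    by (rule nn_integral_eq_integral[OF I, symmetric]) (simp add: gdens_nonneg)
  also have "\<dots> = (\<integral>\<^sup>+\<beta>. ennreal (gdens m s \<beta>) * indicator {\<beta>. t \<le> \<bar>\<beta> $ k - m $ k\<bar>} \<beta> \<partial>lborel)"
    by (intro nn_integral_cong) (simp add: indicator_def)
  also have "\<dots> \<le> ennreal ((s k)\<^sup>2 / t\<^sup>2)" by (rule gdens_tail[OF s t])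
  finally show "(\<integral>\<beta>. gdens m s \<beta> * indicator {\<beta>. t \<le> \<bar>\<beta> $ k - m $ k\<bar>} \<beta> \<partial>lborel) \<le> (s k)\<^sup>2 / t\<^sup>2"
    by (subst (asm) ennreal_le_iff) auto
qed

lemma D_bound:
  fixes m :: "real^'p::finite" and \<pi> :: "real^'p \<Rightarrow> real"
  assumes s: "\<And>k. s k > 0" and sV: "\<And>k. (s k)\<^sup>2 \<le> V" and t: "t > 0"
    and pm: "\<pi> \<in> borel_measurable borel" and pB: "\<And>\<beta>. \<bar>\<pi> \<beta>\<bar> \<le> B" and p0B: "\<bar>\<pi>0\<bar> \<le> B"
    and near: "\<And>\<beta>. (\<forall>k. \<bar>\<beta> $ k - m $ k\<bar> < t) \<Longrightarrow> \<bar>\<pi> \<beta> - \<pi>0\<bar> \<le> \<omega>" and w: "\<omega> \<ge> 0"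
  shows "(\<integral>\<beta>. gdens m s \<beta> * \<bar>\<pi> \<beta> - \<pi>0\<bar> \<partial>lborel) \<le> \<omega> + 2 * B * (CARD('p) * (V / t\<^sup>2))"
proof -
  let ?g = "gdens m s"
  let ?ind = "\<lambda>k \<beta>. indicator {\<beta>::real^'p. t \<le> \<bar>\<beta> $ k - m $ k\<bar>} \<beta> :: real"
  have gi: "integrable lborel ?g" and g1: "(\<integral>\<beta>. ?g \<beta> \<partial>lborel) = 1" using gdens_integrable[where s=s and m=m] s by auto
  have B0: "B \<ge> 0" using p0B by linarith
  have pt: "?g \<beta> * \<bar>\<pi> \<beta> - \<pi>0\<bar> \<le> \<omega> * ?g \<beta> + 2 * B * (\<Sum>k\<in>UNIV. ?g \<beta> * ?ind k \<beta>)" for \<beta>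
  proof (cases "\<forall>k. \<bar>\<beta> $ k - m $ k\<bar> < t")
    case True
    then have "?g \<beta> * \<bar>\<pi> \<beta> - \<pi>0\<bar> \<le> ?g \<beta> * \<omega>" using near gdens_nonneg by (intro mult_left_mono) auto
    moreover have "0 \<le> 2 * B * (\<Sum>k\<in>UNIV. ?g \<beta> * ?ind k \<beta>)"
      using B0 by (intro mult_nonneg_nonneg sum_nonneg) (auto simp: gdens_nonneg)
    ultimately show ?thesis by (simp add: mult.commute)
  next
    case False
    then obtain k where k: "t \<le> \<bar>\<beta> $ k - m $ k\<bar>" by (auto simp: not_less)
    have "\<bar>\<pi> \<beta> - \<pi>0\<bar> \<le> 2 * B" using pB[of \<beta>] p0B by linarith
    then have "?g \<beta> * \<bar>\<pi> \<beta> - \<pi>0\<bar> \<le> ?g \<beta> * (2 * B)" using gdens_nonneg by (intro mult_left_mono) auto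
    also have "\<dots> = 2 * B * (?g \<beta> * ?ind k \<beta>)" using k by simp
    also have "\<dots> \<le> 2 * B * (\<Sum>k\<in>UNIV. ?g \<beta> * ?ind k \<beta>)"
      using B0 by (intro mult_left_mono member_le_sum) (auto simp: gdens_nonneg)
    also have "\<dots> \<le> \<omega> * ?g \<beta> + 2 * B * (\<Sum>k\<in>UNIV. ?g \<beta> * ?ind k \<beta>)"
      using w gdens_nonneg[of m s \<beta>] by simp
    finally show ?thesis .
  qed
  have ik: "integrable lborel (\<lambda>\<beta>. ?g \<beta> * ?ind k \<beta>)" for k using gdens_tail_real(1)[OF s t] .
  have bb2: "?g x * \<bar>\<pi> x - \<pi>0\<bar> \<le> \<bar>B + \<bar>\<pi>0\<bar>\<bar> * ?g x" for x
  proof -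
    have "\<bar>\<pi> x - \<pi>0\<bar> \<le> \<bar>B + \<bar>\<pi>0\<bar>\<bar>" using pB[of x] by linarith
    then show ?thesis using gdens_nonneg[of m s x] by (simp add: mult_left_mono mult.commute)
  qed
  have i2: "integrable lborel (\<lambda>\<beta>. ?g \<beta> * \<bar>\<pi> \<beta> - \<pi>0\<bar>)"
    by (rule Bochner_Integration.integrable_bound[where f="\<lambda>\<beta>. (B + \<bar>\<pi>0\<bar>) * ?g \<beta>"])
       (use gi pm bb2 in \<open>auto simp: abs_mult abs_of_nonneg gdens_nonneg\<close>)
  have "(\<integral>\<beta>. ?g \<beta> * \<bar>\<pi> \<beta> - \<pi>0\<bar> \<partial>lborel) \<le> (\<integral>\<beta>. \<omega> * ?g \<beta> + 2 * B * (\<Sum>k\<in>UNIV. ?g \<beta> * ?ind k \<beta>) \<partial>lborel)"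
    by (rule integral_mono[OF i2 _ pt]) (intro Bochner_Integration.integrable_add integrable_mult_right Bochner_Integration.integrable_sum ik gi)
  also have "\<dots> = \<omega> + 2 * B * (\<Sum>k\<in>UNIV. (\<integral>\<beta>. ?g \<beta> * ?ind k \<beta> \<partial>lborel))"
  proof -
    have ia: "integrable lborel (\<lambda>\<beta>. \<omega> * ?g \<beta>)" using gi by simp
    have ib: "integrable lborel (\<lambda>\<beta>. 2 * B * (\<Sum>k\<in>UNIV. ?g \<beta> * ?ind k \<beta>))"
      by (intro integrable_mult_right Bochner_Integration.integrable_sum ik)
    have s: "(\<integral>\<beta>. (\<Sum>k\<in>UNIV. ?g \<beta> * ?ind k \<beta>) \<partial>lborel) = (\<Sum>k\<in>UNIV. (\<integral>\<beta>. ?g \<beta> * ?ind k \<beta> \<partial>lborel))"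
      by (rule Bochner_Integration.integral_sum) (rule ik)
    show ?thesis
      by (simp only: Bochner_Integration.integral_add[OF ia ib] integral_mult_right_zero s g1 mult_1_right)
  qed
  also have "\<dots> \<le> \<omega> + 2 * B * (\<Sum>k\<in>(UNIV::'p set). V / t\<^sup>2)"
  proof -
    have "(\<integral>\<beta>. ?g \<beta> * ?ind k \<beta> \<partial>lborel) \<le> V / t\<^sup>2" for k
    proof -
      have "(\<integral>\<beta>. ?g \<beta> * ?ind k \<beta> \<partial>lborel) \<le> (s k)\<^sup>2 / t\<^sup>2"
        using gdens_tail_real(2)[where s=s and t=t and m=m and k=k] s t by blast
      also have "\<dots> \<le> V / t\<^sup>2" using sV[of k] by (simp add: divide_right_mono)
      finally show ?thesis .
    qed
    then show ?thesis using B0 by (intro add_left_mono mult_left_mono sum_mono) auto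
  qed
  also have "\<dots> = \<omega> + 2 * B * (CARD('p) * (V / t\<^sup>2))" by simp
  finally show ?thesis .
qed

definition diagm :: "('p::finite \<Rightarrow> real) \<Rightarrow> real^'p^'p" where
  "diagm d = (\<chi> a b. if a = b then d a else 0)"

lemma diagm_mult: "diagm d ** diagm e = diagm (\<lambda>k. d k * e k)"
  unfolding diagm_def matrix_matrix_mult_def
  by (simp add: vec_eq_iff if_distrib[of "\<lambda>x. x * _"] sum.delta cong: if_cong)

lemma diagm_one: "diagm (\<lambda>_. 1) = mat 1"
  by (simp add: diagm_def mat_def)

lemma diagm_mv: "diagm d *v v = (\<chi> i. d i * v $ i)"
  unfolding diagm_def matrix_vector_mult_def
  by (simp add: vec_eq_iff if_distrib[of "\<lambda>x. x * _"] cong: if_cong)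

lemma det_diagm: "det (diagm d) = (\<Prod>k\<in>UNIV. d k)"
  by (subst det_diagonal) (auto simp: diagm_def)

lemma matrix_inv_eq:
  fixes A B :: "real^'p::finite^'p"
  assumes "A ** B = mat 1" "B ** A = mat 1"
  shows "matrix_inv A = B"
proof -
  have "\<exists>A'. A ** A' = mat 1 \<and> A' ** A = mat 1" using assms by blast
  then have P: "A ** matrix_inv A = mat 1 \<and> matrix_inv A ** A = mat 1"
    unfolding matrix_inv_def by (rule someI_ex)
  have "matrix_inv A = matrix_inv A ** (A ** B)" using assms by simp
  also have "\<dots> = (matrix_inv A ** A) ** B" by (simp add: matrix_mul_assoc)
  also have "\<dots> = B" using P by simp
  finally show ?thesis .
qed

lemma matrix_inv_diagm:
  assumes "\<And>k. d k \<noteq> 0"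
  shows "matrix_inv (diagm d) = diagm (\<lambda>k. 1 / d k)"
  by (rule matrix_inv_eq) (simp_all add: diagm_mult assms diagm_one[symmetric])

lemma scale_diagm: "c *\<^sub>R diagm d = diagm (\<lambda>k. c * d k)"
  by (simp add: diagm_def vec_eq_iff)

lemma lambda_min_diagm:
  assumes "lambda_min (diagm d) > r"
  shows "d k > r"
proof -
  let ?E = "{l. \<exists>v. v \<noteq> 0 \<and> diagm d *v v = l *\<^sub>R v}"
  have sub: "?E \<subseteq> range d"
  proof
    fix l assume "l \<in> ?E"
    then obtain v where v: "v \<noteq> 0" "diagm d *v v = l *\<^sub>R v" by auto
    from v(1) obtain i where i: "v $ i \<noteq> 0" by (auto simp: vec_eq_iff)
    have "d i * v $ i = l * v $ i" using arg_cong[OF v(2), of "\<lambda>w. w $ i"] by (simp add: diagm_mv)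
    then have "l = d i" using i by simp
    then show "l \<in> range d" by simp
  qed
  have fin: "finite ?E" by (rule finite_subset[OF sub]) simp
  have "d k \<in> ?E"
    by (rule CollectI, rule exI[of _ "axis k 1"]) (auto simp: diagm_mv vec_eq_iff axis_def)
  then have "lambda_min (diagm d) \<le> d k" unfolding lambda_min_def using fin by (rule Min_le[rotated])
  then show ?thesis using assms by linarith
qed

definition isbasis :: "real^'p::finite \<Rightarrow> bool" where
  "isbasis x \<longleftrightarrow> x \<in> range (\<lambda>k. axis k 1)"

lemma isbasis_mult: "isbasis x \<Longrightarrow> x $ a * x $ b = (if a = b then (x $ a)\<^sup>2 else 0)"
  by (auto simp: isbasis_def axis_def power2_eq_square)

lemma axis_inner1: "axis i 1 \<bullet> v = v $ i" for v :: "real^'p::finite"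
  by (simp add: cart_eq_inner_axis inner_commute)

lemma axis_nth1: "(axis i (1::real) :: real^'p::finite) $ k = (if k = i then 1 else 0)"
  by (simp add: axis_def)

lemma isbasis_inner: "isbasis x \<Longrightarrow> x $ k * (x \<bullet> v) = (x $ k)\<^sup>2 * v $ k"
  by (auto simp: isbasis_def axis_inner1 axis_nth1)

lemma isbasis_inner2:
  assumes "isbasis x"
  shows "(x \<bullet> v)\<^sup>2 = (\<Sum>k\<in>UNIV. (x $ k)\<^sup>2 * (v $ k)\<^sup>2)"
proof -
  obtain i where x: "x = axis i 1" using assms by (auto simp: isbasis_def)
  have "(\<lambda>k. (x $ k)\<^sup>2 * (v $ k)\<^sup>2) = (\<lambda>k. if k = i then (v $ i)\<^sup>2 else 0)"
    by (auto simp: x axis_nth1)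
  then have "(\<Sum>k\<in>UNIV. (x $ k)\<^sup>2 * (v $ k)\<^sup>2) = (\<Sum>k\<in>UNIV. if k = i then (v $ i)\<^sup>2 else 0)"
    by (rule arg_cong)
  also have "\<dots> = (v $ i)\<^sup>2" by simp
  finally show ?thesis by (simp add: x axis_inner1)
qed

lemma inner_sum_vec: "x \<bullet> v = (\<Sum>k\<in>UNIV. x $ k * v $ k)" for x v :: "real^'p::finite"
  by (simp add: inner_vec_def)

lemma XtX_diag:
  assumes "\<forall>j<n. isbasis (fst (h j))"
  shows "XtX n h = diagm (NN n h)"
  unfolding XtX_def diagm_def NN_def
  using assms by (simp add: vec_eq_iff isbasis_mult)

lemma Xty_basis:
  assumes "\<forall>j<n. isbasis (fst (h j))"
  shows "Xty n h $ k = SS \<beta>0 n h k + NN n h k * \<beta>0 $ k"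
proof -
  have "Xty n h $ k = (\<Sum>j<n. fst (h j) $ k * (snd (h j) - fst (h j) \<bullet> \<beta>0) + fst (h j) $ k * (fst (h j) \<bullet> \<beta>0))"
    unfolding Xty_def by (simp add: algebra_simps)
  also have "\<dots> = SS \<beta>0 n h k + (\<Sum>j<n. (fst (h j) $ k)\<^sup>2 * \<beta>0 $ k)"
    unfolding SS_def using assms by (simp add: sum.distrib isbasis_inner)
  also have "\<dots> = SS \<beta>0 n h k + NN n h k * \<beta>0 $ k"
    unfolding NN_def by (simp add: sum_distrib_right)
  finally show ?thesis .
qed

lemma sumsq_basis:
  assumes "\<forall>j<n. isbasis (fst (h j))" and N: "\<And>k. NN n h k > 0"
  defines "m \<equiv> (\<chi> k. Xty n h $ k / NN n h k)"
  shows "(\<Sum>j<n. (snd (h j) - fst (h j) \<bullet> \<beta>)\<^sup>2)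
       = ((\<Sum>j<n. (snd (h j))\<^sup>2) - (\<Sum>k\<in>UNIV. NN n h k * (m $ k)\<^sup>2)) + (\<Sum>k\<in>UNIV. NN n h k * (\<beta> $ k - m $ k)\<^sup>2)"
proof -
  have 1: "(\<Sum>j<n. (snd (h j) - fst (h j) \<bullet> \<beta>)\<^sup>2)
      = (\<Sum>j<n. (snd (h j))\<^sup>2) - 2 * (\<Sum>j<n. snd (h j) * (fst (h j) \<bullet> \<beta>)) + (\<Sum>j<n. (fst (h j) \<bullet> \<beta>)\<^sup>2)"
  proof -
    have e: "(snd (h j) - fst (h j) \<bullet> \<beta>)\<^sup>2 = (snd (h j))\<^sup>2 - 2 * (snd (h j) * (fst (h j) \<bullet> \<beta>)) + (fst (h j) \<bullet> \<beta>)\<^sup>2" for j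
      by (simp add: power2_diff)
    show ?thesis by (simp only: e sum.distrib sum_subtractf sum_distrib_left[symmetric])
  qed
  have 2: "(\<Sum>j<n. snd (h j) * (fst (h j) \<bullet> \<beta>)) = (\<Sum>k\<in>UNIV. \<beta> $ k * Xty n h $ k)"
  proof -
    have "(\<Sum>j<n. snd (h j) * (fst (h j) \<bullet> \<beta>)) = (\<Sum>j<n. \<Sum>k\<in>UNIV. \<beta> $ k * (fst (h j) $ k * snd (h j)))"
      by (simp add: inner_sum_vec sum_distrib_left mult_ac)
    also have "\<dots> = (\<Sum>k\<in>UNIV. \<Sum>j<n. \<beta> $ k * (fst (h j) $ k * snd (h j)))" by (rule sum.swap)
    also have "\<dots> = (\<Sum>k\<in>UNIV. \<beta> $ k * Xty n h $ k)" by (simp add: Xty_def sum_distrib_left)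
    finally show ?thesis .
  qed
  have 3: "(\<Sum>j<n. (fst (h j) \<bullet> \<beta>)\<^sup>2) = (\<Sum>k\<in>UNIV. NN n h k * (\<beta> $ k)\<^sup>2)"
  proof -
    have "(\<Sum>j<n. (fst (h j) \<bullet> \<beta>)\<^sup>2) = (\<Sum>j<n. \<Sum>k\<in>UNIV. (fst (h j) $ k)\<^sup>2 * (\<beta> $ k)\<^sup>2)"
      using assms(1) by (simp add: isbasis_inner2)
    also have "\<dots> = (\<Sum>k\<in>UNIV. \<Sum>j<n. (fst (h j) $ k)\<^sup>2 * (\<beta> $ k)\<^sup>2)" by (rule sum.swap)
    also have "\<dots> = (\<Sum>k\<in>UNIV. NN n h k * (\<beta> $ k)\<^sup>2)" by (simp add: NN_def sum_distrib_right)
    finally show ?thesis .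
  qed
  have 4: "- 2 * (\<beta> $ k * Xty n h $ k) + NN n h k * (\<beta> $ k)\<^sup>2 = NN n h k * (\<beta> $ k - m $ k)\<^sup>2 - NN n h k * (m $ k)\<^sup>2" for k
  proof -
    have "Xty n h $ k = NN n h k * m $ k" unfolding m_def using N[of k] by simp
    then show ?thesis by (simp add: power2_eq_square algebra_simps)
  qed
  have "- 2 * (\<Sum>k\<in>UNIV. \<beta> $ k * Xty n h $ k) + (\<Sum>k\<in>UNIV. NN n h k * (\<beta> $ k)\<^sup>2)
      = (\<Sum>k\<in>UNIV. NN n h k * (\<beta> $ k - m $ k)\<^sup>2) - (\<Sum>k\<in>UNIV. NN n h k * (m $ k)\<^sup>2)"
  proof -
    have "- 2 * (\<Sum>k\<in>UNIV. \<beta> $ k * Xty n h $ k) + (\<Sum>k\<in>UNIV. NN n h k * (\<beta> $ k)\<^sup>2)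
        = (\<Sum>k\<in>UNIV. - 2 * (\<beta> $ k * Xty n h $ k) + NN n h k * (\<beta> $ k)\<^sup>2)"
      by (simp only: sum_distrib_left sum.distrib)
    also have "\<dots> = (\<Sum>k\<in>UNIV. NN n h k * (\<beta> $ k - m $ k)\<^sup>2 - NN n h k * (m $ k)\<^sup>2)"
      by (simp only: 4)
    also have "\<dots> = (\<Sum>k\<in>UNIV. NN n h k * (\<beta> $ k - m $ k)\<^sup>2) - (\<Sum>k\<in>UNIV. NN n h k * (m $ k)\<^sup>2)"
      by (rule sum_subtractf)
    finally show ?thesis .
  qed
  then show ?thesis unfolding 1 2 3 by linarith
qed

definition mh :: "nat \<Rightarrow> 'p::finite hist \<Rightarrow> real^'p" where
  "mh n h = (\<chi> k. Xty n h $ k / NN n h k)"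
definition sh :: "real \<Rightarrow> nat \<Rightarrow> 'p::finite hist \<Rightarrow> 'p \<Rightarrow> real" where
  "sh \<sigma>2 n h k = sqrt (\<sigma>2 / NN n h k)"

lemma sh_pos: "\<sigma>2 > 0 \<Longrightarrow> NN n h k > 0 \<Longrightarrow> sh \<sigma>2 n h k > 0"
  by (simp add: sh_def)

lemma sh_sq: "\<sigma>2 > 0 \<Longrightarrow> NN n h k > 0 \<Longrightarrow> (sh \<sigma>2 n h k)\<^sup>2 = \<sigma>2 / NN n h k"
  by (simp add: sh_def)

lemma gdens_expand:
  assumes s2: "\<sigma>2 > 0" and N: "\<And>k. NN n h k > 0"
  shows "gdens (mh n h) (sh \<sigma>2 n h) \<beta> = (\<Prod>k\<in>UNIV. 1 / sqrt (2 * pi * (sh \<sigma>2 n h k)\<^sup>2)) *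
           exp (- (\<Sum>k\<in>UNIV. NN n h k * (\<beta> $ k - mh n h $ k)\<^sup>2) / (2 * \<sigma>2))"
proof -
  have e: "(\<beta> $ k - mh n h $ k)\<^sup>2 / (2 * (sh \<sigma>2 n h k)\<^sup>2) = NN n h k * (\<beta> $ k - mh n h $ k)\<^sup>2 / (2 * \<sigma>2)" for k
    using N[of k] s2 by (simp add: sh_sq field_simps)
  have "gdens (mh n h) (sh \<sigma>2 n h) \<beta> = (\<Prod>k\<in>UNIV. 1 / sqrt (2 * pi * (sh \<sigma>2 n h k)\<^sup>2) * exp (- (NN n h k * (\<beta> $ k - mh n h $ k)\<^sup>2 / (2 * \<sigma>2))))"
  proof -
    have nk: "normal_density (mh n h $ k) (sh \<sigma>2 n h k) (\<beta> $ k) = 1 / sqrt (2 * pi * (sh \<sigma>2 n h k)\<^sup>2) * exp (- (NN n h k * (\<beta> $ k - mh n h $ k)\<^sup>2 / (2 * \<sigma>2)))" for k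
      unfolding normal_density_def minus_divide_left[symmetric] e by (rule refl)
    show ?thesis unfolding gdens_def nk by (rule refl)
  qed
  also have "\<dots> = (\<Prod>k\<in>UNIV. 1 / sqrt (2 * pi * (sh \<sigma>2 n h k)\<^sup>2)) * (\<Prod>k\<in>UNIV. exp (- (NN n h k * (\<beta> $ k - mh n h $ k)\<^sup>2 / (2 * \<sigma>2))))"
    by (rule prod.distrib)
  also have "(\<Prod>k\<in>UNIV. exp (- (NN n h k * (\<beta> $ k - mh n h $ k)\<^sup>2 / (2 * \<sigma>2)))) = exp (\<Sum>k\<in>UNIV. - (NN n h k * (\<beta> $ k - mh n h $ k)\<^sup>2 / (2 * \<sigma>2)))"
    by (simp add: exp_sum)
  also have "(\<Sum>k\<in>UNIV. - (NN n h k * (\<beta> $ k - mh n h $ k)\<^sup>2 / (2 * \<sigma>2))) = - (\<Sum>k\<in>UNIV. NN n h k * (\<beta> $ k - mh n h $ k)\<^sup>2) / (2 * \<sigma>2)"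
    by (simp add: sum_negf sum_divide_distrib)
  finally show ?thesis .
qed

lemma exp_split: "exp (- (a + b) / d) = exp (- a / d) * exp (- b / (d::real))"
  by (simp add: exp_add[symmetric] diff_divide_distrib)

lemma lik_gdens:
  fixes h :: "'p::finite hist"
  assumes B: "\<forall>j<n. isbasis (fst (h j))" and s2: "\<sigma>2 > 0" and N: "\<And>k. NN n h k > 0"
  shows "\<exists>\<kappa>>0. \<forall>\<beta>. likelihood \<sigma>2 n h \<beta> = \<kappa> * gdens (mh n h) (sh \<sigma>2 n h) \<beta>"
proof -
  define C0 where "C0 = (\<Sum>j<n. (snd (h j))\<^sup>2) - (\<Sum>k\<in>UNIV. NN n h k * (mh n h $ k)\<^sup>2)"
  define C1 where "C1 = (\<Prod>k\<in>(UNIV::'p set). 1 / sqrt (2 * pi * (sh \<sigma>2 n h k)\<^sup>2))"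
  have C1: "C1 > 0" unfolding C1_def using sh_pos[OF s2 N]
    by (intro prod_pos divide_pos_pos real_sqrt_gt_zero mult_pos_pos) (auto simp: pi_gt_zero less_le)
  have "likelihood \<sigma>2 n h \<beta> = exp (- C0 / (2 * \<sigma>2)) / C1 * gdens (mh n h) (sh \<sigma>2 n h) \<beta>" for \<beta>
  proof -
    have "likelihood \<sigma>2 n h \<beta> = exp (\<Sum>j<n. - (snd (h j) - fst (h j) \<bullet> \<beta>)\<^sup>2 / (2 * \<sigma>2))"
      unfolding likelihood_def by (simp add: exp_sum)
    also have "(\<Sum>j<n. - (snd (h j) - fst (h j) \<bullet> \<beta>)\<^sup>2 / (2 * \<sigma>2)) = - (\<Sum>j<n. (snd (h j) - fst (h j) \<bullet> \<beta>)\<^sup>2) / (2 * \<sigma>2)"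
      by (simp add: sum_negf sum_divide_distrib)
    also have "(\<Sum>j<n. (snd (h j) - fst (h j) \<bullet> \<beta>)\<^sup>2) = C0 + (\<Sum>k\<in>UNIV. NN n h k * (\<beta> $ k - mh n h $ k)\<^sup>2)"
      unfolding C0_def mh_def by (rule sumsq_basis[OF B N])
    also have "exp (- (C0 + (\<Sum>k\<in>UNIV. NN n h k * (\<beta> $ k - mh n h $ k)\<^sup>2)) / (2 * \<sigma>2))
        = exp (- C0 / (2 * \<sigma>2)) * exp (- (\<Sum>k\<in>UNIV. NN n h k * (\<beta> $ k - mh n h $ k)\<^sup>2) / (2 * \<sigma>2))"
      by (rule exp_split)
    also have "\<dots> = exp (- C0 / (2 * \<sigma>2)) / C1 * gdens (mh n h) (sh \<sigma>2 n h) \<beta>"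
      unfolding gdens_expand[OF s2 N] C1_def[symmetric] using C1 by simp
    finally show ?thesis .
  qed
  moreover have "exp (- C0 / (2 * \<sigma>2)) / C1 > 0" using C1 by simp
  ultimately show ?thesis by blast
qed

lemma beta_hat_basis:
  assumes B: "\<forall>j<n. isbasis (fst (h j))" and N: "\<And>k. NN n h k > 0"
  shows "beta_hat n h = mh n h"
proof -
  have e: "matrix_inv (XtX n h) = diagm (\<lambda>k. 1 / NN n h k)"
    unfolding XtX_diag[OF B] using N by (intro matrix_inv_diagm) (metis less_irrefl)
  show ?thesis unfolding beta_hat_def mh_def e diagm_mv by (simp add: vec_eq_iff)
qed

lemma inv_sqrt_powr: "A > 0 \<Longrightarrow> 1 / sqrt A = A powr (-1/2)"
  by (simp add: powr_minus powr_half_sqrt inverse_eq_divide)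

lemma mvn_basis:
  fixes h :: "'p::finite hist"
  assumes B: "\<forall>j<n. isbasis (fst (h j))" and s2: "\<sigma>2 > 0" and N: "\<And>k. NN n h k > 0"
  shows "mvn_density (beta_hat n h) (\<sigma>2 *\<^sub>R matrix_inv (XtX n h)) \<beta> = gdens (mh n h) (sh \<sigma>2 n h) \<beta>"
proof -
  let ?s = "sh \<sigma>2 n h" and ?m = "mh n h"
  have sp: "?s k > 0" for k using sh_pos[OF s2 N] .
  have Nne: "NN n h k \<noteq> 0" for k using N[of k] by simp
  have Sig: "\<sigma>2 *\<^sub>R matrix_inv (XtX n h) = diagm (\<lambda>k. (?s k)\<^sup>2)"
  proof -
    have e: "(\<lambda>k. \<sigma>2 * (1 / NN n h k)) = (\<lambda>k. (?s k)\<^sup>2)"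
    proof
      fix k show "\<sigma>2 * (1 / NN n h k) = (?s k)\<^sup>2" using sh_sq[OF s2 N[of k]] by simp
    qed
    show ?thesis unfolding XtX_diag[OF B] matrix_inv_diagm[OF Nne] scale_diagm e ..
  qed
  have Si: "matrix_inv (diagm (\<lambda>k. (?s k)\<^sup>2)) = diagm (\<lambda>k. 1 / (?s k)\<^sup>2)"
  proof (rule matrix_inv_diagm)
    fix k show "(?s k)\<^sup>2 \<noteq> 0" using sp[of k] by simp
  qed
  have q: "(\<beta> - ?m) \<bullet> (diagm (\<lambda>k. 1 / (?s k)\<^sup>2) *v (\<beta> - ?m)) = (\<Sum>k\<in>UNIV. (\<beta> $ k - ?m $ k)\<^sup>2 / (?s k)\<^sup>2)"
    unfolding diagm_mv inner_sum_vec
  proof (rule sum.cong)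
    fix k show "(\<beta> - ?m) $ k * (\<chi> i. 1 / (?s i)\<^sup>2 * (\<beta> - ?m) $ i) $ k = (\<beta> $ k - ?m $ k)\<^sup>2 / (?s k)\<^sup>2"
      by (simp add: power2_eq_square)
  qed simp
  have q2: "(\<Sum>k\<in>UNIV. (\<beta> $ k - ?m $ k)\<^sup>2 / (?s k)\<^sup>2) = (\<Sum>k\<in>UNIV. NN n h k * (\<beta> $ k - ?m $ k)\<^sup>2) / \<sigma>2"
  proof -
    have "(\<beta> $ k - ?m $ k)\<^sup>2 / (?s k)\<^sup>2 = NN n h k * (\<beta> $ k - ?m $ k)\<^sup>2 / \<sigma>2" for k
      using N[of k] s2 by (simp add: sh_sq)
    then show ?thesis by (simp add: sum_divide_distrib)
  qed
  have c: "(2 * pi) powr (- real CARD('p) / 2) * (\<Prod>k\<in>UNIV. (?s k)\<^sup>2) powr (-1/2) = (\<Prod>k\<in>(UNIV::'p set). 1 / sqrt (2 * pi * (?s k)\<^sup>2))"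
  proof -
    have "(\<Prod>k\<in>(UNIV::'p set). 1 / sqrt (2 * pi * (?s k)\<^sup>2)) = (\<Prod>k\<in>(UNIV::'p set). (2 * pi) powr (-1/2) * ((?s k)\<^sup>2) powr (-1/2))"
    proof (rule prod.cong)
      fix k :: 'p
      have "1 / sqrt (2 * pi * (?s k)\<^sup>2) = (2 * pi * (?s k)\<^sup>2) powr (-1/2)"
        using sp[of k] inv_sqrt_powr[of "2 * pi * (?s k)\<^sup>2"] by simp
      also have "\<dots> = (2 * pi) powr (-1/2) * ((?s k)\<^sup>2) powr (-1/2)"
        by (rule powr_mult)
      finally show "1 / sqrt (2 * pi * (?s k)\<^sup>2) = (2 * pi) powr (-1/2) * ((?s k)\<^sup>2) powr (-1/2)" .
    qed simp
    also have "\<dots> = ((2 * pi) powr (-1/2)) ^ CARD('p) * (\<Prod>k\<in>(UNIV::'p set). ((?s k)\<^sup>2) powr (-1/2))"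
      by (simp add: prod.distrib)
    also have "((2 * pi) powr (-1/2)) ^ CARD('p) = (2 * pi) powr (- real CARD('p) / 2)"
      by (subst powr_power) auto
    also have "(\<Prod>k\<in>(UNIV::'p set). ((?s k)\<^sup>2) powr (-1/2)) = (\<Prod>k\<in>UNIV. (?s k)\<^sup>2) powr (-1/2)"
      by (rule prod_powr_distrib[symmetric])
    finally show ?thesis by simp
  qed
  show ?thesis
    unfolding mvn_density_def beta_hat_basis[OF B N] Sig Si q q2 det_diagm gdens_expand[OF s2 N] c[symmetric]
    by simp
qed

lemma det_bound:
  fixes h :: "'p::finite hist" and \<pi> :: "real^'p \<Rightarrow> real" and \<beta>0 :: "real^'p"
  assumes s2: "\<sigma>2 > 0" and pnn: "\<And>b. \<pi> b \<ge> 0" and pc: "continuous_on UNIV \<pi>"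
    and pB: "\<And>\<beta>. \<bar>\<pi> \<beta>\<bar> \<le> B" and p0: "\<pi> \<beta>0 > 0"
    and Bas: "\<forall>j<n. isbasis (fst (h j))" and N: "\<And>k. NN n h k > 0"
    and near: "\<And>\<beta>. (\<forall>k. \<bar>\<beta> $ k - mh n h $ k\<bar> < t) \<Longrightarrow> \<bar>\<pi> \<beta> - \<pi> \<beta>0\<bar> \<le> \<omega>"
    and w: "\<omega> \<ge> 0" and t: "t > 0" and sV: "\<And>k. (sh \<sigma>2 n h k)\<^sup>2 \<le> V"
    and Dv: "\<omega> + 2 * B * (CARD('p) * (V / t\<^sup>2)) \<le> \<pi> \<beta>0 / 2"
  shows "tv_dist (posterior \<pi> \<sigma>2 n h) (mvn (beta_hat n h) (\<sigma>2 *\<^sub>R matrix_inv (XtX n h)))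
           \<le> 4 * (\<omega> + 2 * B * (CARD('p) * (V / t\<^sup>2))) / \<pi> \<beta>0"
proof -
  let ?g = "gdens (mh n h) (sh \<sigma>2 n h)"
  let ?Dv = "\<omega> + 2 * B * (CARD('p) * (V / t\<^sup>2))"
  have sp: "\<And>k. sh \<sigma>2 n h k > 0" using sh_pos[OF s2 N] .
  have gi: "integrable lborel ?g" and g1: "(\<integral>\<beta>. ?g \<beta> \<partial>lborel) = 1"
    using gdens_integrable[where s="sh \<sigma>2 n h" and m="mh n h"] sp by auto
  have pm: "\<pi> \<in> borel_measurable borel" by (rule borel_measurable_continuous_onI[OF pc])
  have p0B: "\<bar>\<pi> \<beta>0\<bar> \<le> B" by (rule pB)
  have D: "(\<integral>\<beta>. ?g \<beta> * \<bar>\<pi> \<beta> - \<pi> \<beta>0\<bar> \<partial>lborel) \<le> ?Dv"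
    by (rule D_bound[OF sp sV t pm pB p0B near w]) auto
  note core = bvm_core[OF gdens_meas gdens_nonneg gi g1 pm pB p0 D Dv]
  define Zg where "Zg = (\<integral>b. \<pi> b * ?g b \<partial>lborel)"
  have Zpos: "Zg > 0" using core(1) p0 unfolding Zg_def by linarith
  obtain \<kappa> where k: "\<kappa> > 0" and L: "\<And>\<beta>. likelihood \<sigma>2 n h \<beta> = \<kappa> * ?g \<beta>"
    using lik_gdens[OF Bas s2 N] by blast
  have "(\<integral>b. \<pi> b * likelihood \<sigma>2 n h b \<partial>lborel) = (\<integral>b. \<kappa> * (\<pi> b * ?g b) \<partial>lborel)"
    unfolding L by (simp add: mult_ac)
  also have "\<dots> = \<kappa> * Zg" unfolding Zg_def by (rule integral_mult_right_zero)
  finally have Zl: "(\<integral>b. \<pi> b * likelihood \<sigma>2 n h b \<partial>lborel) = \<kappa> * Zg" .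
  have post: "posterior \<pi> \<sigma>2 n h = density lborel (\<lambda>\<beta>. ennreal (\<pi> \<beta> * ?g \<beta> / Zg))"
    unfolding posterior_def Zl unfolding L using k by (simp add: field_simps)
  have mv: "mvn (beta_hat n h) (\<sigma>2 *\<^sub>R matrix_inv (XtX n h)) = density lborel (\<lambda>\<beta>. ennreal (?g \<beta>))"
    unfolding mvn_def mvn_basis[OF Bas s2 N] ..
  have i1: "integrable lborel (\<lambda>\<beta>. \<pi> \<beta> * ?g \<beta> / Zg)"
  proof -
    have "integrable lborel (\<lambda>\<beta>. \<pi> \<beta> * ?g \<beta>)"
    proof (rule Bochner_Integration.integrable_bound[where f="\<lambda>\<beta>. B * ?g \<beta>"])
      show "integrable lborel (\<lambda>\<beta>. B * ?g \<beta>)" using gi by simp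
      show "(\<lambda>\<beta>. \<pi> \<beta> * ?g \<beta>) \<in> borel_measurable lborel" using pm by simp
      have "\<bar>\<pi> x\<bar> * ?g x \<le> \<bar>B\<bar> * ?g x" for x
        using pB[of x] gdens_nonneg[of "mh n h" "sh \<sigma>2 n h" x] by (meson abs_ge_self mult_right_mono order_trans)
      then show "AE x in lborel. norm (\<pi> x * ?g x) \<le> norm (B * ?g x)"
        by (simp add: abs_mult gdens_nonneg abs_of_nonneg)
    qed
    then show ?thesis by simp
  qed
  have "tv_dist (posterior \<pi> \<sigma>2 n h) (mvn (beta_hat n h) (\<sigma>2 *\<^sub>R matrix_inv (XtX n h)))
      \<le> (\<integral>\<beta>. \<bar>\<pi> \<beta> * ?g \<beta> / Zg - ?g \<beta>\<bar> \<partial>lborel)"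
    unfolding post mv
    by (rule tv_le_L1[OF i1 _ gi gdens_nonneg]) (intro divide_nonneg_pos mult_nonneg_nonneg pnn gdens_nonneg Zpos)
  also have "\<dots> \<le> 4 * ?Dv / \<pi> \<beta>0" using core(2) unfolding Zg_def .
  finally show ?thesis .
qed

lemma mh_close:
  assumes Bas: "\<forall>j<n. isbasis (fst (h j))" and N: "NN n h k > 0"
    and S: "\<bar>SS \<beta>0 n h k\<bar> < t * NN n h k"
  shows "\<bar>mh n h $ k - \<beta>0 $ k\<bar> < t"
proof -
  have "mh n h $ k = \<beta>0 $ k + SS \<beta>0 n h k / NN n h k"
    unfolding mh_def using Xty_basis[OF Bas, of k \<beta>0] N by (simp add: field_simps)
  then have "\<bar>mh n h $ k - \<beta>0 $ k\<bar> = \<bar>SS \<beta>0 n h k\<bar> / NN n h k" using N by (simp add: abs_divide)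
  also have "\<dots> < t" using S N by (simp add: divide_less_eq)
  finally show ?thesis .
qed

lemma pern:
  fixes \<Lambda> :: "nat \<Rightarrow> 'p::finite hist \<Rightarrow> (real^'p) measure" and \<pi> :: "real^'p \<Rightarrow> real" and \<beta>0 :: "real^'p"
  assumes s2: "\<sigma>2 > 0" and pnn: "\<And>b. \<pi> b \<ge> 0" and pc: "continuous_on UNIV \<pi>"
    and pB: "\<And>\<beta>. \<bar>\<pi> \<beta>\<bar> \<le> B" and p0: "\<pi> \<beta>0 > 0"
    and V: "valid_rule \<Lambda>" and P: "P = traj \<Lambda> \<beta>0 \<sigma>2 n"
    and AEb: "AE h in P. \<forall>j<n. fst (h j) \<in> range (\<lambda>k. axis k 1)"
    and G: "measure P {h \<in> space P. lambda_min (XtX n h) > r} > 1 - \<epsilon>"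
    and t: "t > 0" and w: "\<omega> \<ge> 0"
    and near0: "\<And>\<beta>. (\<forall>k. \<bar>\<beta> $ k - \<beta>0 $ k\<bar> < 2 * t) \<Longrightarrow> \<bar>\<pi> \<beta> - \<pi> \<beta>0\<bar> \<le> \<omega>"
    and R: "R > 0" "r \<ge> R"
    and Dv: "\<omega> + 2 * B * (CARD('p) * ((\<sigma>2 / R) / t\<^sup>2)) \<le> \<pi> \<beta>0 / 2"
    and Dc: "4 * (\<omega> + 2 * B * (CARD('p) * ((\<sigma>2 / R) / t\<^sup>2))) / \<pi> \<beta>0 \<le> c"
  shows "emeasure P {h \<in> space P. tv_dist (posterior \<pi> \<sigma>2 n h) (mvn (beta_hat n h) (\<sigma>2 *\<^sub>R matrix_inv (XtX n h))) > c}
         \<le> ennreal \<epsilon> + ennreal (2 * CARD('p) * exp (- (r * t\<^sup>2 / (2 * \<sigma>2))))"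
proof -
  let ?T = "{h \<in> space P. tv_dist (posterior \<pi> \<sigma>2 n h) (mvn (beta_hat n h) (\<sigma>2 *\<^sub>R matrix_inv (XtX n h))) > c}"
  let ?G = "{h \<in> space P. lambda_min (XtX n h) > r}"
  let ?A = "\<lambda>(k, s::real). {h \<in> space P. NN n h k > r \<and> s * SS \<beta>0 n h k \<ge> t * NN n h k}"
  let ?I = "(UNIV :: 'p set) \<times> {1, -1 :: real}"
  let ?Bad = "\<Union>i\<in>?I. ?A i"
  let ?b = "exp (- (r * t\<^sup>2 / (2 * \<sigma>2)))"
  interpret prob_space P using traj_facts[OF V s2] P by auto
  have SP: "sets P = sets (hist_space n)" using traj_facts[OF V s2] P by auto
  have r0: "r \<ge> 0" using R by linarith
  have Ai: "?A i \<in> sets P" and Ab: "emeasure P (?A i) \<le> ennreal ?b" if "i \<in> ?I" for i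
  proof -
    obtain k s where i: "i = (k, s)" by (cases i)
    have s: "s\<^sup>2 = 1" using that i by auto
    have "emeasure P (?A i) \<le> ennreal ?b"
      unfolding i P using tail_bound[OF V s2 t r0 s, of \<beta>0 n k] by simp
    moreover have "?A i \<in> sets P"
    proof -
      have m1: "(\<lambda>h. t * NN n h k) \<in> borel_measurable (hist_space n)" by (intro borel_measurable_times borel_measurable_const NN_meas)
      have m2: "(\<lambda>h. s * SS \<beta>0 n h k) \<in> borel_measurable (hist_space n)" by (intro borel_measurable_times borel_measurable_const SS_meas)
      have sp: "space P = space (hist_space n)" using SP by (rule sets_eq_imp_space_eq)
      have "?A i = {h \<in> space (hist_space n). r < NN n h k} \<inter> {h \<in> space (hist_space n). t * NN n h k \<le> s * SS \<beta>0 n h k}"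
        unfolding i sp by auto
      also have "\<dots> \<in> sets (hist_space n)"
        by (intro sets.Int borel_measurable_less borel_measurable_le m1 m2 NN_meas borel_measurable_const)
      finally show ?thesis unfolding SP .
    qed
    ultimately show "?A i \<in> sets P" "emeasure P (?A i) \<le> ennreal ?b" by auto
  qed
  have Badm: "?Bad \<in> sets P"
  proof (rule sets.finite_UN)
    show "finite ?I" by simp
    fix i assume "i \<in> ?I" then show "?A i \<in> sets P" by (rule Ai)
  qed
  have cardI: "card ?I = 2 * CARD('p)" by (simp add: card_cartesian_product)
  have Badb: "emeasure P ?Bad \<le> ennreal (2 * CARD('p) * ?b)"
  proof -
    have "emeasure P ?Bad \<le> (\<Sum>i\<in>?I. emeasure P (?A i))"
      by (rule emeasure_subadditive_finite) (use Ai in auto)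
    also have "\<dots> \<le> (\<Sum>i\<in>?I. ennreal ?b)" by (rule sum_mono) (rule Ab)
    also have "\<dots> = ennreal (2 * CARD('p) * ?b)" using cardI by (simp add: ennreal_mult' ennreal_of_nat_eq_real_of_nat)
    finally show ?thesis .
  qed
  from AEb obtain N0 where N0: "{h \<in> space P. \<not> (\<forall>j<n. fst (h j) \<in> range (\<lambda>k. axis k 1))} \<subseteq> N0"
    "emeasure P N0 = 0" "N0 \<in> sets P" by (rule AE_E)
  have key: "?T \<subseteq> (space P - ?G) \<union> ?Bad \<union> N0"
  proof
    fix h assume hT: "h \<in> ?T"
    show "h \<in> (space P - ?G) \<union> ?Bad \<union> N0"
    proof (rule ccontr)
      assume "h \<notin> (space P - ?G) \<union> ?Bad \<union> N0"
      then have hG: "lambda_min (XtX n h) > r" and hB: "h \<notin> ?Bad" and hN: "h \<notin> N0" and hs: "h \<in> space P"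
        using hT by auto
      have Bas: "\<forall>j<n. isbasis (fst (h j))" using hN N0(1) hs unfolding isbasis_def by blast
      have NNr: "NN n h k > r" for k
        using lambda_min_diagm[where d="NN n h" and r=r and k=k] hG unfolding XtX_diag[OF Bas] by simp
      have NN0: "NN n h k > 0" for k using NNr[of k] r0 by linarith
      have Sk: "\<bar>SS \<beta>0 n h k\<bar> < t * NN n h k" for k
      proof -
        have "h \<notin> ?A (k, 1)" "h \<notin> ?A (k, -1)" using hB by auto
        then have "\<not> (1 * SS \<beta>0 n h k \<ge> t * NN n h k)" "\<not> (-1 * SS \<beta>0 n h k \<ge> t * NN n h k)"
          using hs NNr[of k] by auto
        then show ?thesis by auto
      qed
      have mc: "\<bar>mh n h $ k - \<beta>0 $ k\<bar> < t" for k by (rule mh_close[OF Bas NN0 Sk])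
      have near: "\<bar>\<pi> \<beta> - \<pi> \<beta>0\<bar> \<le> \<omega>" if "\<forall>k. \<bar>\<beta> $ k - mh n h $ k\<bar> < t" for \<beta>
      proof (rule near0, intro allI)
        fix k
        have "\<bar>\<beta> $ k - mh n h $ k\<bar> < t" using that by blast
        then show "\<bar>\<beta> $ k - \<beta>0 $ k\<bar> < 2 * t" using mc[of k] by linarith
      qed
      have sV: "(sh \<sigma>2 n h k)\<^sup>2 \<le> \<sigma>2 / R" for k
        unfolding sh_sq[OF s2 NN0] using NNr[of k] R s2
        by (intro divide_left_mono) (auto simp: mult_pos_pos)
      have "tv_dist (posterior \<pi> \<sigma>2 n h) (mvn (beta_hat n h) (\<sigma>2 *\<^sub>R matrix_inv (XtX n h)))
             \<le> 4 * (\<omega> + 2 * B * (CARD('p) * ((\<sigma>2 / R) / t\<^sup>2))) / \<pi> \<beta>0"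
        by (rule det_bound[OF s2 pnn pc pB p0 Bas NN0 near w t sV Dv])
      then show False using hT Dc by auto
    qed
  qed
  show ?thesis
  proof (cases "?G \<in> sets P")
    case True
    have U1: "(space P - ?G) \<union> ?Bad \<in> sets P" by (intro sets.Un sets.Diff sets.top True Badm)
    have U: "(space P - ?G) \<union> ?Bad \<union> N0 \<in> sets P" by (intro sets.Un U1 N0(3))
    have "emeasure P ?T \<le> emeasure P ((space P - ?G) \<union> ?Bad \<union> N0)"
      by (rule emeasure_mono[OF key U])
    also have "\<dots> \<le> emeasure P ((space P - ?G) \<union> ?Bad) + emeasure P N0"
      by (rule emeasure_subadditive[OF U1 N0(3)])
    also have "\<dots> \<le> emeasure P (space P - ?G) + emeasure P ?Bad"
    proof -
      have sa: "emeasure P ((space P - ?G) \<union> ?Bad) \<le> emeasure P (space P - ?G) + emeasure P ?Bad"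
        by (rule emeasure_subadditive) (intro sets.Diff sets.top True, rule Badm)
      then show ?thesis by (simp only: N0(2) add_0_right)
    qed
    also have "\<dots> \<le> ennreal \<epsilon> + ennreal (2 * CARD('p) * ?b)"
    proof (rule add_mono[OF _ Badb])
      have "emeasure P (space P - ?G) = ennreal (1 - measure P ?G)"
        by (simp only: emeasure_eq_measure prob_compl[OF True])
      also have "\<dots> \<le> ennreal \<epsilon>" using G by (intro ennreal_leI) linarith
      finally show "emeasure P (space P - ?G) \<le> ennreal \<epsilon>" .
    qed
    finally show ?thesis .
  next
    case False
    then have "measure P ?G = 0" by (simp add: measure_notin_sets)
    then have e1: "\<epsilon> > 1" using G by linarith
    have "emeasure P ?T \<le> 1"
    proof (cases "?T \<in> sets P")
      case True
      then have "emeasure P ?T \<le> emeasure P (space P)" by (intro emeasure_mono) auto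
      then show ?thesis using emeasure_space_1 by simp
    next
      case False
      then show ?thesis by (simp add: emeasure_notin_sets)
    qed
    also have "\<dots> \<le> ennreal \<epsilon>" using ennreal_leI[of 1 \<epsilon>] e1 by simp
    also have "\<dots> \<le> ennreal \<epsilon> + ennreal (2 * CARD('p) * ?b)" by simp
    finally show ?thesis .
  qed
qed

lemma exp_neg_le_inv: "x > 0 \<Longrightarrow> exp (- x) \<le> 1 / (x::real)"
proof -
  assume x: "x > 0"
  have "x \<le> exp x" using exp_ge_add_one_self[of x] by linarith
  then have "1 / exp x \<le> 1 / x" using x by (intro divide_left_mono) auto
  then show ?thesis by (simp add: exp_minus inverse_eq_divide)
qed

lemma expbd:
  fixes p r t \<sigma>2 e :: real
  assumes p: "p > 0" and t: "t > 0" and s2: "\<sigma>2 > 0" and e: "e > 0" and r: "r \<ge> 8 * p * \<sigma>2 / (t\<^sup>2 * e)"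
  shows "2 * p * exp (- (r * t\<^sup>2 / (2 * \<sigma>2))) \<le> e / 2"
proof -
  have pos: "8 * p * \<sigma>2 / (t\<^sup>2 * e) > 0" using p t s2 e by simp
  have x: "r * t\<^sup>2 / (2 * \<sigma>2) \<ge> 4 * p / e"
  proof -
    have "r * t\<^sup>2 / (2 * \<sigma>2) \<ge> (8 * p * \<sigma>2 / (t\<^sup>2 * e)) * t\<^sup>2 / (2 * \<sigma>2)"
      using r t s2 by (intro divide_right_mono mult_right_mono) auto
    also have "(8 * p * \<sigma>2 / (t\<^sup>2 * e)) * t\<^sup>2 / (2 * \<sigma>2) = 4 * p / e"
      using t s2 e by (simp add: field_simps)
    finally show ?thesis .
  qed
  have xp: "4 * p / e > 0" using p e by simp
  have "exp (- (r * t\<^sup>2 / (2 * \<sigma>2))) \<le> 1 / (r * t\<^sup>2 / (2 * \<sigma>2))"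
    using x xp by (intro exp_neg_le_inv) linarith
  also have "\<dots> \<le> 1 / (4 * p / e)"
  proof (rule divide_left_mono[OF x])
    have "r * t\<^sup>2 / (2 * \<sigma>2) > 0" using x xp by linarith
    then show "0 < r * t\<^sup>2 / (2 * \<sigma>2) * (4 * p / e)" using xp by (rule mult_pos_pos)
  qed simp
  finally have "2 * p * exp (- (r * t\<^sup>2 / (2 * \<sigma>2))) \<le> 2 * p * (1 / (4 * p / e))"
    using p by (intro mult_left_mono) auto
  also have "\<dots> = e / 2" using p e by (simp add: field_simps)
  finally show ?thesis .
qed

lemma aux8: "(X::real) \<le> Y / 8 \<Longrightarrow> 0 < Y \<Longrightarrow> 4 * X \<le> Y" by linarith

theorem corollary1:
  fixes \<beta>0 :: "real^'p::finite" and \<sigma>2 :: real and \<pi> :: "real^'p \<Rightarrow> real"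
    and r \<epsilon> :: "nat \<Rightarrow> real" and Pset :: "nat \<Rightarrow> 'p hist measure set" and c :: real
  assumes "\<sigma>2 > 0"
    and "\<forall>b. \<pi> b \<ge> 0" and "integrable lborel \<pi>" and "(\<integral>b. \<pi> b \<partial>lborel) = 1"
    and "continuous_on UNIV \<pi>" and "bounded (range \<pi>)" and "\<pi> \<beta>0 > 0"
    and "filterlim r at_top sequentially" and "\<epsilon> \<longlonglongrightarrow> 0"
    and "\<And>n P. P \<in> Pset n \<Longrightarrow> \<exists>\<Lambda>. valid_rule \<Lambda> \<and> P = traj \<Lambda> \<beta>0 \<sigma>2 n"
    and "\<And>n P. P \<in> Pset n \<Longrightarrow>
           (AE h in P. \<forall>j<n. fst (h j) \<in> range (\<lambda>k. axis k 1))"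
    and "\<And>n P. P \<in> Pset n \<Longrightarrow>
           measure P {h \<in> space P. lambda_min (XtX n h) > r n} > 1 - \<epsilon> n"
    and "c > 0"
  shows "limsup (\<lambda>n. SUP P \<in> Pset n.
           emeasure P {h \<in> space P.
             tv_dist (posterior \<pi> \<sigma>2 n h) (mvn (beta_hat n h) (\<sigma>2 *\<^sub>R matrix_inv (XtX n h))) > c})
         = 0"
proof -
  note s2 = assms(1) and pnn' = assms(2) and pc = assms(5) and bd = assms(6) and p0 = assms(7)
    and rlim = assms(8) and elim = assms(9) and PV = assms(10) and PAE = assms(11) and PG = assms(12) and c = assms(13)
  have pnn: "\<And>b. \<pi> b \<ge> 0" using pnn' by auto
  obtain B where pB: "\<And>\<beta>. \<bar>\<pi> \<beta>\<bar> \<le> B" using bd unfolding bounded_iff by auto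
  define \<pi>0 where "\<pi>0 = \<pi> \<beta>0"
  have B0: "B > 0" using pB[of \<beta>0] p0 by linarith
  define p where "p = real CARD('p)"
  have p: "p > 0" unfolding p_def by simp
  define \<omega> where "\<omega> = min (\<pi>0 / 8) (c * \<pi>0 / 16)"
  have w: "\<omega> > 0" unfolding \<omega>_def \<pi>0_def using p0 c by simp
  obtain \<eta> where eta: "\<eta> > 0" and eta': "\<And>\<beta>. dist \<beta> \<beta>0 < \<eta> \<Longrightarrow> dist (\<pi> \<beta>) (\<pi> \<beta>0) < \<omega>"
    using pc w unfolding continuous_on_iff by (metis UNIV_I)
  define t where "t = \<eta> / (2 * p)"
  have t: "t > 0" unfolding t_def using eta p by simp
  have near0: "\<bar>\<pi> \<beta> - \<pi> \<beta>0\<bar> \<le> \<omega>" if "\<forall>k. \<bar>\<beta> $ k - \<beta>0 $ k\<bar> < 2 * t" for \<beta>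
  proof -
    have "dist \<beta> \<beta>0 \<le> (\<Sum>k\<in>UNIV. \<bar>(\<beta> - \<beta>0) $ k\<bar>)" unfolding dist_norm by (rule norm_le_l1_cart)
    also have "\<dots> < (\<Sum>k\<in>(UNIV::'p set). 2 * t)"
      using that by (intro sum_strict_mono) auto
    also have "\<dots> = \<eta>" unfolding t_def p_def by simp
    finally have "dist (\<pi> \<beta>) (\<pi> \<beta>0) < \<omega>" by (rule eta')
    then show ?thesis by (simp add: dist_real_def)
  qed
  define R where "R = max 1 (2 * B * p * \<sigma>2 / (t\<^sup>2 * \<omega>))"
  have R: "R > 0" unfolding R_def by simp
  have Rw: "2 * B * (p * ((\<sigma>2 / R) / t\<^sup>2)) \<le> \<omega>"
  proof -
    have "2 * B * p * \<sigma>2 / (t\<^sup>2 * \<omega>) \<le> R" unfolding R_def by simp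
    then have "2 * B * p * \<sigma>2 \<le> R * (t\<^sup>2 * \<omega>)" using t w by (simp add: divide_le_eq)
    then show ?thesis using R t by (simp add: field_simps)
  qed
  have Dv: "\<omega> + 2 * B * (CARD('p) * ((\<sigma>2 / R) / t\<^sup>2)) \<le> \<pi> \<beta>0 / 2"
    using Rw p0 unfolding p_def[symmetric] \<omega>_def \<pi>0_def by linarith
  have Dc: "4 * (\<omega> + 2 * B * (CARD('p) * ((\<sigma>2 / R) / t\<^sup>2))) / \<pi> \<beta>0 \<le> c"
  proof -
    have "\<omega> + 2 * B * (CARD('p) * ((\<sigma>2 / R) / t\<^sup>2)) \<le> 2 * \<omega>" using Rw unfolding p_def by linarith
    also have "\<dots> \<le> c * \<pi> \<beta>0 / 8" unfolding \<omega>_def \<pi>0_def by linarith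
    finally have X: "\<omega> + 2 * B * (CARD('p) * ((\<sigma>2 / R) / t\<^sup>2)) \<le> c * \<pi> \<beta>0 / 8" .
    have cp: "c * \<pi> \<beta>0 > 0" using c p0 by simp
    have "4 * (\<omega> + 2 * B * (CARD('p) * ((\<sigma>2 / R) / t\<^sup>2))) \<le> c * \<pi> \<beta>0" using aux8[OF X cp] .
    then show ?thesis by (subst pos_divide_le_eq[OF p0])
  qed
  define f where "f n = (SUP P \<in> Pset n. emeasure P {h \<in> space P.
             tv_dist (posterior \<pi> \<sigma>2 n h) (mvn (beta_hat n h) (\<sigma>2 *\<^sub>R matrix_inv (XtX n h))) > c})" for n
  have fb: "f n \<le> ennreal (\<epsilon> n) + ennreal (2 * CARD('p) * exp (- (r n * t\<^sup>2 / (2 * \<sigma>2))))" if rn: "r n \<ge> R" for n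
    unfolding f_def
  proof (rule SUP_least)
    fix P assume P: "P \<in> Pset n"
    obtain \<Lambda> where V: "valid_rule \<Lambda>" and PP: "P = traj \<Lambda> \<beta>0 \<sigma>2 n" using PV[OF P] by blast
    show "emeasure P {h \<in> space P. tv_dist (posterior \<pi> \<sigma>2 n h) (mvn (beta_hat n h) (\<sigma>2 *\<^sub>R matrix_inv (XtX n h))) > c}
        \<le> ennreal (\<epsilon> n) + ennreal (2 * CARD('p) * exp (- (r n * t\<^sup>2 / (2 * \<sigma>2))))"
      by (rule pern[OF s2 pnn pc pB p0 V PP PAE[OF P] PG[OF P] t less_imp_le[OF w] near0 R rn Dv Dc])
  qed
  have "limsup f \<le> 0"
  proof (rule ennreal_le_epsilon)
    fix e :: real assume e: "e > 0"
    define R1 where "R1 = max R (8 * p * \<sigma>2 / (t\<^sup>2 * e))"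
    have ev1: "eventually (\<lambda>n. R1 \<le> r n) sequentially" using rlim by (simp add: filterlim_at_top)
    have ev2: "eventually (\<lambda>n. \<epsilon> n < e / 2) sequentially" using elim e by (intro order_tendstoD) auto
    have "eventually (\<lambda>n. f n \<le> ennreal e) sequentially"
      using ev1 ev2
    proof eventually_elim
      case (elim n)
      have rn: "r n \<ge> R" "r n \<ge> 8 * p * \<sigma>2 / (t\<^sup>2 * e)" using elim(1) unfolding R1_def by auto
      have "2 * p * exp (- (r n * t\<^sup>2 / (2 * \<sigma>2))) \<le> e / 2" by (rule expbd[OF p t s2 e rn(2)])
      then have a: "ennreal (2 * CARD('p) * exp (- (r n * t\<^sup>2 / (2 * \<sigma>2)))) \<le> ennreal (e / 2)"
        unfolding p_def by (intro ennreal_leI) simp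
      have b: "ennreal (\<epsilon> n) \<le> ennreal (e / 2)" using elim(2) by (intro ennreal_leI) simp
      have "f n \<le> ennreal (\<epsilon> n) + ennreal (2 * CARD('p) * exp (- (r n * t\<^sup>2 / (2 * \<sigma>2))))" by (rule fb[OF rn(1)])
      also have "\<dots> \<le> ennreal (e / 2) + ennreal (e / 2)" by (rule add_mono[OF b a])
      also have "\<dots> = ennreal e" using e by (simp add: ennreal_plus[symmetric])
      finally show ?case .
    qed
    then have "limsup f \<le> ennreal e" by (rule Limsup_bounded)
    then show "limsup f \<le> 0 + ennreal e" by simp
  qed
  then show ?thesis unfolding f_def by simp
qed

end
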